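(* Let $\mathcal{C}$ be a concept class over $\{\pm1\}^n$, $\mathcal{D}$ a class of distributions closed under restrictions, and $D^\star$ a distribution that has a depth-$d$, size-$s$ subcube partition into $\mathcal{D}$. Let $A$ be a base learner that learns $\mathcal{C}$ over distributions in $\mathcal{D}$ to expected error $\le\frac{\varepsilon}{\log(1/\varepsilon)}$, with sample complexity $m$. Then for any $f\in\mathcal{C}$, with samples $S_{\mathrm{train}}$ and $S_{\mathrm{test}}$ drawn i.i.d. from $D^\star_f$ of sizes \[ m_{\mathrm{train}} := O\left(\frac{s\log(1/\varepsilon)}{\varepsilon}\cdot m\right), \qquad m_{\mathrm{test}} := O\left(\frac{s d\log(n)\log^3(1/\varepsilon)}{\varepsilon^2}\right), \] $\mathrm{PartitionLearn}_A(d,s,\varepsilon,S_{\mathrm{train}},S_{\mathrm{test}})$ returns a hypothesis $H$ satisfying $\mathbb{E}[\mathrm{error}(H,D^\star_f)]\le O(\varepsilon)$.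
   Context: A restriction is $\rho\in\{\pm1,\star\}^n$; $x\in\rho$ means $x_i=\rho_i$ or $\rho_i=\star$ for all $i$; depth of $\rho$ = number of non-$\star$ coordinates. $D_\rho$ is $D$ conditioned on $x\in\rho$; for labeled $S$, $S_\rho=\{(x,y)\in S:x\in\rho\}$. $\mathcal{D}$ is closed under restrictions if $D\in\mathcal{D}\Rightarrow D_\rho\in\mathcal{D}$ for all $\rho$. $D_f$ is the distribution of $(x,f(x))$, $x\sim D$; $\mathrm{error}(h,P)=\Pr_{(x,y)\sim P}[h(x)\ne y]$, $\mathrm{error}(h,S)$ = fraction of $(x,y)\in S$ with $h(x)\neq y$ (an output $\bot$ always counts as an error). $A$ learns $\mathcal{C}$ to expected error $\varepsilon'$ over $D$ with $m$ samples if for every $f\in\mathcal{C}$, given $m$ i.i.d. samples from $D_f$, its output $h$ has $\mathbb{E}[\mathrm{error}(h,D_f)]\le\varepsilon'$. $D^\star$ has a depth-$d$, size-$s$ subcube partition into $\mathcal{D}$ if there are $s$ pairwise disjoint restrictions $\rho_1,\dots,\rho_s$, each of depth $\le d$, such that every $x$ in the support of $D^\star$ lies in some $\rho_i$ and $(D^\star)_{\rho_i}\in\mathcal{D}$ for all $i$. For an ordered list $L$ of restrictions and map $\mathcal{H}$ from restrictions to hypotheses, the subcube list hypothesis $L\circ\mathcal{H}$ outputs $\mathcal{H}(\rho)(x)$ for the first $\rho\in L$ with $x\in\rho$, and $\bot$ if no such $\rho$ exists. Procedure $\mathrm{FindSubcubeList}(S_{\mathrm{test}},\mathcal{H},\varepsilon_a,s)$: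 set $S_{\mathrm{rem}}\leftarrow S_{\mathrm{test}}$, $L\leftarrow$ empty list; while $|S_{\mathrm{rem}}|/|S_{\mathrm{test}}|>\varepsilon_a$ and at most $\lceil 2s\ln(1/\varepsilon_a)\rceil$ iterations have run: among all restrictions $\rho$ of depth $\le d$ with $|(S_{\mathrm{rem}})_\rho|/|S_{\mathrm{rem}}|\ge\frac{1}{2s}$, choose $\rho^\star$ minimizing $\mathrm{error}(\mathcal{H}(\rho),(S_{\mathrm{rem}})_\rho)$, append $\rho^\star$ to $L$, and remove $(S_{\mathrm{rem}})_{\rho^\star}$ from $S_{\mathrm{rem}}$; return $L$. Algorithm $\mathrm{PartitionLearn}_A(d,s,\varepsilon,S_{\mathrm{train}},S_{\mathrm{test}})$: for every restriction $\rho$ of depth $\le d$ set $h_\rho\leftarrow A((S_{\mathrm{train}})_\rho)$ and $\mathcal{H}(\rho)=h_\rho$; then $L\leftarrow\mathrm{FindSubcubeList}(S_{\mathrm{test}},\mathcal{H},\varepsilon,s)$; return $L\circ\mathcal{H}$. *)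

theory Defs
  imports "HOL-Probability.Probability"
begin

text \<open>Points of the cube {+-1}^n are boolean lists of length n (True = +1, False = -1);
labels +-1 are booleans. A restriction is a list over {+-1, star}, encoded as
bool option list (None = star).\<close>

type_synonym point = "bool list"
type_synonym restr = "bool option list"
type_synonym sample = "(point \<times> bool) list"
type_synonym hyp = "point \<Rightarrow> bool"

definition in_restr :: "point \<Rightarrow> restr \<Rightarrow> bool" where
  "in_restr x \<rho> \<longleftrightarrow> length x = length \<rho> \<and>
     (\<forall>i < length \<rho>. \<rho> ! i = None \<or> \<rho> ! i = Some (x ! i))"

definition depth :: "restr \<Rightarrow> nat" where
  "depth \<rho> = length (filter (\<lambda>c. c \<noteq> None) \<rho>)"

definition restrs :: "nat \<Rightarrow> nat \<Rightarrow> restr set" where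
  "restrs n d = {\<rho>. length \<rho> = n \<and> depth \<rho> \<le> d}"

text \<open>D conditioned on x in rho (only meaningful when rho has positive mass).\<close>
definition restrict_pmf :: "point pmf \<Rightarrow> restr \<Rightarrow> point pmf" where
  "restrict_pmf D \<rho> = cond_pmf D {x. in_restr x \<rho>}"

definition closed_under_restrictions :: "nat \<Rightarrow> point pmf set \<Rightarrow> bool" where
  "closed_under_restrictions n \<D> \<longleftrightarrow>
     (\<forall>D \<in> \<D>. \<forall>\<rho>. length \<rho> = n \<longrightarrow> measure_pmf.prob D {x. in_restr x \<rho>} > 0 \<longrightarrow>
        restrict_pmf D \<rho> \<in> \<D>)"

definition labeled :: "point pmf \<Rightarrow> (point \<Rightarrow> bool) \<Rightarrow> (point \<times> bool) pmf" where
  "labeled D f = map_pmf (\<lambda>x. (x, f x)) D"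

definition error :: "hyp \<Rightarrow> (point \<times> bool) pmf \<Rightarrow> real" where
  "error h P = measure_pmf.prob P {(x, y). h x \<noteq> y}"

text \<open>Error of a hypothesis that may output bottom (None); bottom always counts as an error.\<close>
definition error_opt :: "(point \<Rightarrow> bool option) \<Rightarrow> (point \<times> bool) pmf \<Rightarrow> real" where
  "error_opt H P = measure_pmf.prob P {(x, y). H x \<noteq> Some y}"

definition sample_error :: "hyp \<Rightarrow> sample \<Rightarrow> real" where
  "sample_error h S = real (length (filter (\<lambda>(x, y). h x \<noteq> y) S)) / real (length S)"

definition learns :: "(sample \<Rightarrow> hyp) \<Rightarrow> (point \<Rightarrow> bool) set \<Rightarrow> point pmf set \<Rightarrow> nat \<Rightarrow> real \<Rightarrow> bool" where
  "learns A C \<D> m eps' \<longleftrightarrow>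
     (\<forall>D \<in> \<D>. \<forall>f \<in> C.
        measure_pmf.expectation (replicate_pmf m (labeled D f)) (\<lambda>S. error (A S) (labeled D f)) \<le> eps')"

text \<open>Convention: a learner with sample complexity m, given a larger sample, uses its first m examples.\<close>
definition uses_first :: "nat \<Rightarrow> (sample \<Rightarrow> hyp) \<Rightarrow> bool" where
  "uses_first m A \<longleftrightarrow> (\<forall>S. m \<le> length S \<longrightarrow> A S = A (take m S))"

definition has_subcube_partition :: "nat \<Rightarrow> nat \<Rightarrow> nat \<Rightarrow> point pmf \<Rightarrow> point pmf set \<Rightarrow> bool" where
  "has_subcube_partition n d s D \<D> \<longleftrightarrow>
     (\<exists>\<rho>s :: restr list. length \<rho>s = s \<and>
        (\<forall>i < s. length (\<rho>s ! i) = n \<and> depth (\<rho>s ! i) \<le> d) \<and>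
        (\<forall>i < s. \<forall>j < s. i \<noteq> j \<longrightarrow> \<not> (\<exists>x. in_restr x (\<rho>s ! i) \<and> in_restr x (\<rho>s ! j))) \<and>
        (\<forall>x \<in> set_pmf D. \<exists>i < s. in_restr x (\<rho>s ! i)) \<and>
        (\<forall>i < s. measure_pmf.prob D {x. in_restr x (\<rho>s ! i)} > 0 \<longrightarrow> restrict_pmf D (\<rho>s ! i) \<in> \<D>))"

definition restrict_sample :: "restr \<Rightarrow> sample \<Rightarrow> sample" where
  "restrict_sample \<rho> S = filter (\<lambda>(x, y). in_restr x \<rho>) S"

text \<open>Main loop of FindSubcubeList; the first nat argument is the number of iterations
still allowed. Ties in the arg-min are broken by an unspecified choice (SOME).\<close>
fun fsl_loop :: "nat \<Rightarrow> nat \<Rightarrow> (restr \<Rightarrow> hyp) \<Rightarrow> real \<Rightarrow> nat \<Rightarrow> sample \<Rightarrow> nat \<Rightarrow> sample \<Rightarrow> restr list \<Rightarrow> restr list" where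
  "fsl_loop n d H ea s Stest 0 Srem L = L"
| "fsl_loop n d H ea s Stest (Suc k) Srem L =
     (if real (length Srem) / real (length Stest) \<le> ea then L
      else (let cands = {\<rho> \<in> restrs n d.
                   real (length (restrict_sample \<rho> Srem)) / real (length Srem) \<ge> 1 / (2 * real s)};
                \<rho>' = (SOME \<rho>. \<rho> \<in> cands \<and>
                   (\<forall>\<rho>2 \<in> cands. sample_error (H \<rho>) (restrict_sample \<rho> Srem)
                                  \<le> sample_error (H \<rho>2) (restrict_sample \<rho>2 Srem)))
            in fsl_loop n d H ea s Stest k (filter (\<lambda>(x, y). \<not> in_restr x \<rho>') Srem) (L @ [\<rho>'])))"

definition find_subcube_list :: "nat \<Rightarrow> nat \<Rightarrow> sample \<Rightarrow> (restr \<Rightarrow> hyp) \<Rightarrow> real \<Rightarrow> nat \<Rightarrow> restr list" where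
  "find_subcube_list n d Stest H ea s =
     fsl_loop n d H ea s Stest (nat \<lceil>2 * real s * ln (1 / ea)\<rceil>) Stest []"

fun subcube_list_hyp :: "restr list \<Rightarrow> (restr \<Rightarrow> hyp) \<Rightarrow> point \<Rightarrow> bool option" where
  "subcube_list_hyp [] H x = None"
| "subcube_list_hyp (\<rho> # L) H x = (if in_restr x \<rho> then Some (H \<rho> x) else subcube_list_hyp L H x)"

definition partition_learn :: "(sample \<Rightarrow> hyp) \<Rightarrow> nat \<Rightarrow> nat \<Rightarrow> nat \<Rightarrow> real \<Rightarrow> sample \<Rightarrow> sample \<Rightarrow> point \<Rightarrow> bool option" where
  "partition_learn A n d s eps Strain Stest =
     (let H = (\<lambda>\<rho>. A (restrict_sample \<rho> Strain))
      in subcube_list_hyp (find_subcube_list n d Stest H eps s) H)"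

end

theory Submission
  imports Defs
begin


lemma expectation_bind_pmf_bounded:
  fixes f :: "'b \<Rightarrow> real"
  assumes "\<And>x. \<bar>f x\<bar> \<le> B"
  shows "measure_pmf.expectation (bind_pmf M N) f = measure_pmf.expectation M (\<lambda>x. measure_pmf.expectation (N x) f)"
  unfolding measure_pmf_bind
  apply (rule integral_bind[where K="count_space UNIV" and B=B and B'=1])
  using assms by (auto simp: measure_pmf.emeasure_space_1 space_subprob_algebra prob_space_imp_subprob_space measure_pmf.prob_space_axioms
     intro!: measurable_pmf_measure1 measure_pmf.finite_measure_axioms)

lemma expectation_cong_pmf:
  fixes f g :: "'b \<Rightarrow> real"
  assumes "\<And>x. x \<in> set_pmf M \<Longrightarrow> f x = g x"
  shows "measure_pmf.expectation M f = measure_pmf.expectation M g"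
  using assms by (intro integral_cong_AE) (auto simp: AE_measure_pmf_iff)

lemma integrable_pmf_bounded:
  fixes f :: "'b \<Rightarrow> real"
  assumes "\<And>x. x \<in> set_pmf M \<Longrightarrow> \<bar>f x\<bar> \<le> B"
  shows "integrable (measure_pmf M) f"
  by (rule measure_pmf.integrable_const_bound[where B=B]) (use assms in \<open>auto simp: AE_measure_pmf_iff\<close>)

lemma expectation_bind_pmf_supp:
  fixes f :: "'b \<Rightarrow> real"
  assumes "\<And>y. y \<in> set_pmf (bind_pmf M N) \<Longrightarrow> \<bar>f y\<bar> \<le> B"
  shows "measure_pmf.expectation (bind_pmf M N) f = measure_pmf.expectation M (\<lambda>x. measure_pmf.expectation (N x) f)"
proof -
  define f' where "f' = (\<lambda>y. if y \<in> set_pmf (bind_pmf M N) then f y else 0)"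
  have b: "\<bar>f' y\<bar> \<le> \<bar>B\<bar>" for y using assms unfolding f'_def by force
  have "measure_pmf.expectation (bind_pmf M N) f = measure_pmf.expectation (bind_pmf M N) f'"
    by (rule expectation_cong_pmf) (simp add: f'_def)
  also have "\<dots> = measure_pmf.expectation M (\<lambda>x. measure_pmf.expectation (N x) f')"
    by (rule expectation_bind_pmf_bounded[OF b])
  also have "\<dots> = measure_pmf.expectation M (\<lambda>x. measure_pmf.expectation (N x) f)"
    by (rule expectation_cong_pmf, rule expectation_cong_pmf) (auto simp: f'_def)
  finally show ?thesis .
qed

lemma expectation_replicate_Suc:
  fixes F :: "'a list \<Rightarrow> real"
  assumes "\<And>S. length S = Suc k \<Longrightarrow> \<bar>F S\<bar> \<le> B"
  shows "measure_pmf.expectation (replicate_pmf (Suc k) P) F =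
         measure_pmf.expectation P (\<lambda>x. measure_pmf.expectation (replicate_pmf k P) (\<lambda>xs. F (x # xs)))"
proof -
  have "measure_pmf.expectation (replicate_pmf (Suc k) P) F =
     measure_pmf.expectation P (\<lambda>x. measure_pmf.expectation (bind_pmf (replicate_pmf k P) (\<lambda>xs. return_pmf (x#xs))) F)"
    apply simp
    apply (rule expectation_bind_pmf_supp[where B=B])
    using assms by (auto simp: set_replicate_pmf)
  also have "\<dots> = measure_pmf.expectation P (\<lambda>x. measure_pmf.expectation (replicate_pmf k P) (\<lambda>xs. F (x # xs)))"
    apply (rule expectation_cong_pmf)
    apply (subst expectation_bind_pmf_supp[where B=B])
    using assms by (auto simp: set_replicate_pmf)
  finally show ?thesis .
qed

lemma expectation_replicate_prod:
  fixes g :: "'a \<Rightarrow> real"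
  assumes "\<And>x. 0 \<le> g x" "\<And>x. g x \<le> 1"
  shows "measure_pmf.expectation (replicate_pmf k P) (\<lambda>S. prod_list (map g S)) = (measure_pmf.expectation P g) ^ k"
proof (induction k)
  case 0
  then show ?case by simp
next
  case (Suc k)
  have b: "\<bar>prod_list (map g S)\<bar> \<le> 1" for S
  proof -
    have "0 \<le> prod_list (map g S) \<and> prod_list (map g S) \<le> 1"
      by (induction S) (auto simp: assms intro: mult_le_one)
    then show ?thesis by simp
  qed
  have "measure_pmf.expectation (replicate_pmf (Suc k) P) (\<lambda>S. prod_list (map g S)) =
     measure_pmf.expectation P (\<lambda>x. measure_pmf.expectation (replicate_pmf k P) (\<lambda>xs. g x * prod_list (map g xs)))"
    by (subst expectation_replicate_Suc[where B=1]) (use b in auto)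
  also have "\<dots> = measure_pmf.expectation P (\<lambda>x. g x * (measure_pmf.expectation P g) ^ k)"
    using Suc by simp
  also have "\<dots> = (measure_pmf.expectation P g) ^ Suc k" by simp
  finally show ?case .
qed

lemma expectation_indicator_pmf:
  "measure_pmf.expectation P (\<lambda>x. if Q x then 1 else 0 :: real) = measure_pmf.prob P {x. Q x}"
proof -
  have "(\<lambda>x. if Q x then 1 else 0 :: real) = indicator {x. Q x}" by (auto simp: indicator_def)
  then show ?thesis by (simp add: measure_pmf.emeasure_eq_measure)
qed

lemma expectation_replicate_count:
  "measure_pmf.expectation (replicate_pmf k P) (\<lambda>S. real (length (filter Q S))) = real k * measure_pmf.prob P {x. Q x}"
proof (induction k)
  case 0
  then show ?case by simp
next
  case (Suc k)
  have "measure_pmf.expectation (replicate_pmf (Suc k) P) (\<lambda>S. real (length (filter Q S))) =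
     measure_pmf.expectation P (\<lambda>x. measure_pmf.expectation (replicate_pmf k P) (\<lambda>xs. (if Q x then 1 else 0) + real (length (filter Q xs))))"
  proof (subst expectation_replicate_Suc[where B="real (Suc k)"])
    show "\<bar>real (length (filter Q S))\<bar> \<le> real (Suc k)" if "length S = Suc k" for S
      using length_filter_le[of Q S] that by simp
  qed (intro expectation_cong_pmf, auto)
  also have "\<dots> = measure_pmf.expectation P (\<lambda>x. (if Q x then 1 else 0) + real k * measure_pmf.prob P {x. Q x})"
  proof (rule expectation_cong_pmf)
    fix x
    have "measure_pmf.expectation (replicate_pmf k P) (\<lambda>xs. (if Q x then 1 else 0) + real (length (filter Q xs)))
       = (if Q x then 1 else 0) + measure_pmf.expectation (replicate_pmf k P) (\<lambda>xs. real (length (filter Q xs)))"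
      by (subst Bochner_Integration.integral_add) (auto intro!: integrable_pmf_bounded[where B="real k"] simp: set_replicate_pmf order_trans[OF length_filter_le])
    then show "measure_pmf.expectation (replicate_pmf k P) (\<lambda>xs. (if Q x then 1 else 0) + real (length (filter Q xs)))
       = (if Q x then 1 else 0) + real k * measure_pmf.prob P {x. Q x}" using Suc by simp
  qed
  also have "\<dots> = real (Suc k) * measure_pmf.prob P {x. Q x}"
    by (subst Bochner_Integration.integral_add) (auto intro!: integrable_pmf_bounded[where B=1] simp: expectation_indicator_pmf algebra_simps)
  finally show ?case .
qed


lemma exp_count_bound:
  "measure_pmf.expectation (replicate_pmf k P) (\<lambda>S. exp (- real (length (filter Q S))))
     \<le> exp (- real k * measure_pmf.prob P {x. Q x} / 2)"
proof -
  define g where "g = (\<lambda>x. if Q x then exp (-1) else (1::real))"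
  define p where "p = measure_pmf.prob P {x. Q x}"
  have g01: "0 \<le> g x" "g x \<le> 1" for x by (auto simp: g_def)
  have pl: "prod_list (map g S) = exp (- real (length (filter Q S)))" for S
    by (induction S) (auto simp: g_def exp_add[symmetric] algebra_simps)
  have Eg: "measure_pmf.expectation P g = 1 - (1 - exp (-1)) * p"
  proof -
    have "g = (\<lambda>x. 1 - (1 - exp (-1)) * (if Q x then 1 else 0))" by (auto simp: g_def fun_eq_iff)
    then have "measure_pmf.expectation P g = measure_pmf.expectation P (\<lambda>x. 1 - (1 - exp (-1)) * (if Q x then 1 else 0))" by simp
    also have "\<dots> = 1 - (1 - exp (-1)) * p"
      by (subst Bochner_Integration.integral_diff) (auto intro!: integrable_pmf_bounded[where B=1] simp: expectation_indicator_pmf p_def)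
    finally show ?thesis .
  qed
  have e2: "exp (-1::real) \<le> 1/2"
  proof -
    have "2 \<le> exp (1::real)" using exp_ge_add_one_self[of 1] by simp
    then show ?thesis by (simp add: exp_minus field_simps)
  qed
  have p01: "0 \<le> p" "p \<le> 1" by (auto simp: p_def)
  have "measure_pmf.expectation P g \<le> exp (- p / 2)"
  proof -
    have "1 - (1 - exp (-1)) * p \<le> 1 + (- p / 2)" using mult_right_mono[OF e2 p01(1)] by (simp add: algebra_simps)
    also have "\<dots> \<le> exp (- p / 2)" by (rule exp_ge_add_one_self)
    finally show ?thesis using Eg by simp
  qed
  moreover have "0 \<le> measure_pmf.expectation P g" using g01 by simp
  ultimately have "(measure_pmf.expectation P g) ^ k \<le> exp (- p / 2) ^ k" by (simp add: power_mono)
  also have "\<dots> = exp (- real k * p / 2)" by (simp add: exp_of_nat_mult[symmetric])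
  finally show ?thesis
    using expectation_replicate_prod[of g k P, OF g01] by (simp add: pl p_def)
qed

lemma count_tail:
  "measure_pmf.prob (replicate_pmf k P) {S. real (length (filter Q S)) \<le> a}
     \<le> exp (a - real k * measure_pmf.prob P {x. Q x} / 2)"
proof -
  have "measure_pmf.prob (replicate_pmf k P) {S. real (length (filter Q S)) \<le> a}
      = measure_pmf.expectation (replicate_pmf k P) (\<lambda>S. if real (length (filter Q S)) \<le> a then 1 else 0)"
    by (simp add: expectation_indicator_pmf)
  also have "\<dots> \<le> measure_pmf.expectation (replicate_pmf k P) (\<lambda>S. exp a * exp (- real (length (filter Q S))))"
  proof (rule integral_mono)
    show "integrable (measure_pmf (replicate_pmf k P)) (\<lambda>S. if real (length (filter Q S)) \<le> a then 1 else 0::real)"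
      by (rule integrable_pmf_bounded[where B=1]) auto
    show "integrable (measure_pmf (replicate_pmf k P)) (\<lambda>S. exp a * exp (- real (length (filter Q S))))"
      by (rule integrable_pmf_bounded[where B="exp a"]) auto
    fix S
    show "(if real (length (filter Q S)) \<le> a then 1 else 0) \<le> exp a * exp (- real (length (filter Q S)))"
    proof (cases "real (length (filter Q S)) \<le> a")
      case True
      then have "1 \<le> exp (a - real (length (filter Q S)))" by simp
      then show ?thesis using True by (simp add: exp_diff exp_minus field_simps)
    qed simp
  qed
  also have "\<dots> = exp a * measure_pmf.expectation (replicate_pmf k P) (\<lambda>S. exp (- real (length (filter Q S))))"
    by simp
  also have "\<dots> \<le> exp a * exp (- real k * measure_pmf.prob P {x. Q x} / 2)"
    by (rule mult_left_mono[OF exp_count_bound]) simp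
  also have "\<dots> = exp (a - real k * measure_pmf.prob P {x. Q x} / 2)" by (simp add: exp_add[symmetric])
  finally show ?thesis .
qed


lemma expectation_cond_split:
  fixes \<phi> :: "'a \<Rightarrow> real"
  assumes fin: "finite (set_pmf P)" and ne: "set_pmf P \<inter> Q \<noteq> {}"
  shows "measure_pmf.expectation P (\<lambda>x. indicator Q x * \<phi> x) = measure_pmf.prob P Q * measure_pmf.expectation (cond_pmf P Q) \<phi>"
proof -
  have pos: "measure_pmf.prob P Q > 0" using ne by (auto intro: measure_pmf_posI)
  have "measure_pmf.expectation P (\<lambda>x. indicator Q x * \<phi> x) = (\<Sum>a\<in>set_pmf P. indicator Q a * \<phi> a * pmf P a)"
    by (rule integral_measure_pmf_real) (use fin in auto)
  also have "measure_pmf.expectation (cond_pmf P Q) \<phi> = (\<Sum>a\<in>set_pmf P. \<phi> a * pmf (cond_pmf P Q) a)"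
    by (rule integral_measure_pmf_real) (use fin ne in auto)
  moreover have "measure_pmf.prob P Q * (\<Sum>a\<in>set_pmf P. \<phi> a * pmf (cond_pmf P Q) a) = (\<Sum>a\<in>set_pmf P. indicator Q a * \<phi> a * pmf P a)"
    unfolding sum_distrib_left
    by (rule sum.cong) (use pos in \<open>auto simp: pmf_cond[OF ne] indicator_def\<close>)
  ultimately show ?thesis by simp
qed


lemma prob_not_pmf: "measure_pmf.prob P {x. \<not> Q x} = 1 - measure_pmf.prob P {x. Q x}"
proof -
  have "{x. \<not> Q x} = UNIV - {x. Q x}" by auto
  then show ?thesis using measure_pmf.prob_compl[of "{x. Q x}" P] by simp
qed

lemma abs_expectation_le:
  fixes f :: "'b \<Rightarrow> real"
  assumes "\<And>x. x \<in> set_pmf M \<Longrightarrow> \<bar>f x\<bar> \<le> B"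
  shows "\<bar>measure_pmf.expectation M f\<bar> \<le> B"
proof -
  have i: "integrable (measure_pmf M) f" by (rule integrable_pmf_bounded[OF assms])
  have "measure_pmf.expectation M f \<le> B"
    by (rule measure_pmf.integral_le_const[OF i]) (use assms in \<open>auto simp: AE_measure_pmf_iff abs_le_iff\<close>)
  moreover have "measure_pmf.expectation M (\<lambda>x. - f x) \<le> B"
    by (rule measure_pmf.integral_le_const) (use assms i in \<open>auto simp: AE_measure_pmf_iff abs_le_iff\<close>)
  ultimately show ?thesis by simp
qed

lemma filter_take_bound:
  fixes g :: "'a list \<Rightarrow> real"
  assumes fin: "finite (set_pmf P)" and ne: "set_pmf P \<inter> {z. Q z} \<noteq> {}"
  shows "(\<And>T. 0 \<le> g T) \<Longrightarrow> (\<And>T. g T \<le> 1) \<Longrightarrow>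
    measure_pmf.expectation (replicate_pmf N P)
      (\<lambda>S. if m \<le> length (filter Q S) then g (take m (filter Q S)) else 0)
    \<le> measure_pmf.expectation (replicate_pmf m (cond_pmf P {z. Q z})) g"
proof (induction N arbitrary: m g)
  case 0
  then show ?case by (cases m) auto
next
  case (Suc N)
  note g01 = Suc.prems
  note IH = Suc.IH
  show ?case
  proof (cases m)
    case 0
    then show ?thesis by simp
  next
    case (Suc m')
    note mS = this
    let ?C = "cond_pmf P {z. Q z}"
    define F where "F = (\<lambda>S. if m \<le> length (filter Q S) then g (take m (filter Q S)) else 0)"
    define c where "c = measure_pmf.expectation (replicate_pmf m ?C) g"
    define \<phi> where "\<phi> = (\<lambda>x. measure_pmf.expectation (replicate_pmf m' ?C) (\<lambda>T. g (x # T)))"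
    define p where "p = measure_pmf.prob P {z. Q z}"
    have Fb: "\<bar>F S\<bar> \<le> 1" for S using g01[of "take m (filter Q S)"] by (auto simp: F_def)
    have "measure_pmf.expectation (replicate_pmf (Suc N) P) F =
       measure_pmf.expectation P (\<lambda>x. measure_pmf.expectation (replicate_pmf N P) (\<lambda>xs. F (x # xs)))"
      by (rule expectation_replicate_Suc[where B=1]) (use Fb in auto)
    also have "\<dots> \<le> measure_pmf.expectation P (\<lambda>x. if Q x then \<phi> x else c)"
    proof (rule integral_mono)
      show "integrable (measure_pmf P) (\<lambda>x. measure_pmf.expectation (replicate_pmf N P) (\<lambda>xs. F (x # xs)))"
        apply (rule integrable_pmf_bounded[where B=1])
        using Fb by (intro abs_expectation_le) (auto simp: abs_le_iff)
      have "\<bar>\<phi> x\<bar> \<le> 1" for x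
        unfolding \<phi>_def using g01
        by (intro abs_expectation_le) (auto simp: abs_le_iff)
      moreover have "\<bar>c\<bar> \<le> 1"
        unfolding c_def using g01
        by (intro abs_expectation_le) (auto simp: abs_le_iff)
      ultimately show "integrable (measure_pmf P) (\<lambda>x. if Q x then \<phi> x else c)"
        by (intro integrable_pmf_bounded[where B=1]) auto
      fix x
      show "measure_pmf.expectation (replicate_pmf N P) (\<lambda>xs. F (x # xs)) \<le> (if Q x then \<phi> x else c)"
      proof (cases "Q x")
        case True
        have "measure_pmf.expectation (replicate_pmf N P) (\<lambda>xs. F (x # xs)) =
           measure_pmf.expectation (replicate_pmf N P)
             (\<lambda>S. if m' \<le> length (filter Q S) then g (x # take m' (filter Q S)) else 0)"
          unfolding F_def mS using True by (simp cong: if_cong)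
        also have "\<dots> \<le> \<phi> x" unfolding \<phi>_def
          by (rule IH[where g="\<lambda>T. g (x # T)"]) (use g01 in auto)
        finally show ?thesis using True by simp
      next
        case False
        then show ?thesis using IH[of g m, OF g01] by (simp add: F_def c_def cong: if_cong)
      qed
    qed
    also have "\<dots> = measure_pmf.expectation P (\<lambda>x. indicator {z. Q z} x * \<phi> x + c * (if \<not> Q x then 1 else 0))"
      by (rule expectation_cong_pmf) (auto simp: indicator_def)
    also have "\<dots> = p * measure_pmf.expectation ?C \<phi> + c * (1 - p)"
    proof -
      have ib: "\<bar>\<phi> x\<bar> \<le> 1" for x
        unfolding \<phi>_def using g01
        by (intro abs_expectation_le) (auto simp: abs_le_iff)
      show ?thesis
        apply (subst Bochner_Integration.integral_add)
          apply (rule integrable_pmf_bounded[where B=1]) using ib apply (simp add: indicator_def)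
         apply (rule integrable_pmf_bounded[where B="\<bar>c\<bar>"]) apply simp
        apply (subst expectation_cond_split[OF fin ne])
        apply (simp add: expectation_indicator_pmf prob_not_pmf p_def)
        done
    qed
    also have "measure_pmf.expectation ?C \<phi> = c"
      unfolding c_def \<phi>_def mS
      by (rule expectation_replicate_Suc[symmetric, where B=1]) (use g01 in \<open>auto simp: abs_le_iff\<close>)
    finally show ?thesis by (simp add: F_def c_def algebra_simps)
  qed
qed


lemma length_filter_conj_le: "length (filter (\<lambda>z. Q z \<and> P z) S) \<le> length (filter P S)"
  by (induction S) auto

lemma length_filter_disj:
  assumes "\<And>z. \<not> (A z \<and> B z)"
  shows "length (filter (\<lambda>z. A z \<or> B z) S) = length (filter A S) + length (filter B S)"
  using assms by (induction S) auto

lemma sum_filter_unique: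
  fixes s :: nat
  assumes "\<forall>z\<in>set S. \<forall>i<s. \<forall>j<s. P i z \<and> P j z \<longrightarrow> i = j"
  shows "(\<Sum>i<s. length (filter (P i) S)) = length (filter (\<lambda>z. \<exists>i<s. P i z) S)"
  using assms
proof (induction S)
  case Nil
  then show ?case by simp
next
  case (Cons z S)
  have "(\<Sum>i<s. length (filter (P i) (z # S))) = (\<Sum>i<s. (if P i z then 1 else 0) + length (filter (P i) S))"
    by (rule sum.cong) auto
  also have "\<dots> = (\<Sum>i<s. (if P i z then 1 else 0)) + (\<Sum>i<s. length (filter (P i) S))"
    by (rule sum.distrib)
  also have "(\<Sum>i<s. (if P i z then 1 else 0)) = (if \<exists>i<s. P i z then 1 else (0::nat))"
  proof (cases "\<exists>i<s. P i z")
    case True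
    then obtain i0 where i0: "i0 < s" "P i0 z" by blast
    have "(\<Sum>i<s. (if P i z then 1 else 0)) = (\<Sum>i<s. (if i = i0 then 1 else (0::nat)))"
      by (rule sum.cong) (use Cons.prems i0 in auto)
    also have "\<dots> = 1" using i0 by (subst sum.delta) auto
    finally show ?thesis using True by simp
  next
    case False
    then show ?thesis by simp
  qed
  finally show ?case using Cons by simp
qed

lemma slh_append:
  "subcube_list_hyp (L @ [\<rho>]) H x =
     (case subcube_list_hyp L H x of None \<Rightarrow> (if in_restr x \<rho> then Some (H \<rho> x) else None) | Some v \<Rightarrow> Some v)"
  by (induction L) auto


lemma finite_restrs: "finite (restrs n d)"
proof -
  have "restrs n d \<subseteq> {xs. set xs \<subseteq> (UNIV :: bool option set) \<and> length xs = n}"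
    by (auto simp: restrs_def)
  moreover have "finite {xs. set xs \<subseteq> (UNIV :: bool option set) \<and> length xs = n}"
    by (rule finite_lists_length_eq) simp
  ultimately show ?thesis by (rule finite_subset)
qed



lemma phi_step:
  fixes a r c :: real
  assumes c: "0 < c" and a: "0 < a" "a \<le> r" and rc: "c < r"
  shows "a / r + (if r - a \<le> c then 0 else ln ((r - a) / c) + 1) \<le> ln (r / c) + 1"
proof (cases "r - a \<le> c")
  case True
  have "a / r \<le> 1" using a by simp
  moreover have "ln (r / c) > 0" using c rc by simp
  ultimately show ?thesis using True by simp
next
  case False
  have rpos: "r > 0" using c rc by simp
  have ra: "r - a > 0" using False c by simp
  have "ln ((r - a) / r) \<le> (r - a) / r - 1" by (rule ln_le_minus_one) (use ra rpos in simp)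
  also have "\<dots> = - (a / r)" using rpos by (simp add: field_simps)
  finally have h: "a / r \<le> - ln ((r - a) / r)" by simp
  have "ln (r / c) = ln ((r - a) / c) - ln ((r - a) / r)"
    using rpos ra c by (simp add: ln_div)
  then show ?thesis using h False by simp
qed


context
  fixes n d :: nat and H :: "restr \<Rightarrow> hyp" and ea :: real and s :: nat and Stest :: sample and \<rho>s :: "restr list"
  assumes ne: "Stest \<noteq> []" and ea_pos: "0 < ea" and s_pos: "0 < s" and len: "length \<rho>s = s"
    and pieces: "\<forall>i<s. \<rho>s ! i \<in> restrs n d"
    and cover: "\<forall>z\<in>set Stest. \<exists>i<s. in_restr (fst z) (\<rho>s ! i)"
    and disj: "\<forall>i<s. \<forall>j<s. i \<noteq> j \<longrightarrow> \<not> (\<exists>x. in_restr x (\<rho>s ! i) \<and> in_restr x (\<rho>s ! j))"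
begin

definition unc :: "restr list \<Rightarrow> point \<times> bool \<Rightarrow> bool" where
  "unc L = (\<lambda>(x, y). subcube_list_hyp L H x = None)"

definition Wc :: nat where
  "Wc = length (filter (\<lambda>(x, y). \<exists>i<s. in_restr x (\<rho>s ! i) \<and> H (\<rho>s ! i) x \<noteq> y) Stest)"

lemma step:
  assumes Srem: "Srem = filter (unc L) Stest" and big: "\<not> real (length Srem) / real (length Stest) \<le> ea"
  defines "cands \<equiv> {\<rho> \<in> restrs n d. real (length (restrict_sample \<rho> Srem)) / real (length Srem) \<ge> 1 / (2 * real s)}"
  defines "\<rho>' \<equiv> SOME \<rho>. \<rho> \<in> cands \<and> (\<forall>\<rho>2\<in>cands. sample_error (H \<rho>) (restrict_sample \<rho> Srem) \<le> sample_error (H \<rho>2) (restrict_sample \<rho>2 Srem))"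
  shows "\<rho>' \<in> restrs n d" and "real (length (restrict_sample \<rho>' Srem)) \<ge> real (length Srem) / (2 * real s)"
    and "real (length (filter (\<lambda>(x, y). in_restr x \<rho>' \<and> H \<rho>' x \<noteq> y) Srem)) * real (length Srem)
          \<le> 2 * real Wc * real (length (restrict_sample \<rho>' Srem))"
proof -
  define r where "r = real (length Srem)"
  have Npos: "real (length Stest) > 0" using ne by simp
  have rpos: "r > 0"
  proof -
    have "r / real (length Stest) > ea" using big by (simp add: r_def)
    then have "r / real (length Stest) > 0" using ea_pos by linarith
    then show ?thesis using Npos by (simp add: zero_less_divide_iff)
  qed
  have sub: "set Srem \<subseteq> set Stest" using Srem by auto
  define a where "a = (\<lambda>i. real (length (restrict_sample (\<rho>s ! i) Srem)))"
  define se where "se = (\<lambda>\<rho>. sample_error (H \<rho>) (restrict_sample \<rho> Srem))"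
  have uniq: "\<forall>z\<in>set Srem. \<forall>i<s. \<forall>j<s. (\<lambda>i (x, y). in_restr x (\<rho>s ! i)) i z \<and> (\<lambda>i (x, y). in_restr x (\<rho>s ! i)) j z \<longrightarrow> i = j"
    using disj by auto
  have sumA: "(\<Sum>i<s. a i) = r"
  proof -
    have "(\<Sum>i<s. length (filter ((\<lambda>i (x, y). in_restr x (\<rho>s ! i)) i) Srem)) =
          length (filter (\<lambda>z. \<exists>i<s. (\<lambda>i (x, y). in_restr x (\<rho>s ! i)) i z) Srem)"
      by (rule sum_filter_unique[OF uniq])
    also have "filter (\<lambda>z. \<exists>i<s. (\<lambda>i (x, y). in_restr x (\<rho>s ! i)) i z) Srem = Srem"
      using cover sub by (force intro!: filter_True)
    finally show ?thesis unfolding a_def r_def restrict_sample_def of_nat_sum[symmetric] by simp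
  qed
  have "\<exists>i<s. a i \<ge> r / real s"
  proof (rule ccontr)
    assume "\<not> ?thesis"
    then have "\<forall>i<s. a i < r / real s" by auto
    then have "(\<Sum>i<s. a i) < (\<Sum>i<s. r / real s)"
      using s_pos by (intro sum_strict_mono) auto
    also have "\<dots> = r" using s_pos by simp
    finally show False using sumA by simp
  qed
  then obtain i0 where i0: "i0 < s" "a i0 \<ge> r / real s" by blast
  have "\<rho>s ! i0 \<in> cands"
  proof -
    have "r / real s \<ge> r / (2 * real s)" using rpos s_pos by (simp add: frac_le)
    then have "a i0 / r \<ge> 1 / (2 * real s)" using i0 rpos s_pos by (simp add: field_simps)
    then show ?thesis using pieces i0 by (simp add: cands_def a_def r_def)
  qed
  then have cne: "cands \<noteq> {}" by blast
  have cfin: "finite cands" unfolding cands_def using finite_restrs by simp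
  define v where "v = Min (se ` cands)"
  have "v \<in> se ` cands" unfolding v_def using cne cfin by (intro Min_in) auto
  then obtain \<rho>m where \<rho>m: "\<rho>m \<in> cands" "se \<rho>m = v" by blast
  have "\<forall>\<rho>2\<in>cands. se \<rho>m \<le> se \<rho>2" using cfin \<rho>m unfolding v_def by auto
  then have ex: "\<exists>\<rho>. \<rho> \<in> cands \<and> (\<forall>\<rho>2\<in>cands. se \<rho> \<le> se \<rho>2)" using \<rho>m by blast
  have \<rho>'p: "\<rho>' \<in> cands \<and> (\<forall>\<rho>2\<in>cands. se \<rho>' \<le> se \<rho>2)"
    unfolding \<rho>'_def using someI_ex[OF ex[unfolded se_def]] by (simp add: se_def)
  then show "\<rho>' \<in> restrs n d" by (simp add: cands_def)
  define a' where "a' = real (length (restrict_sample \<rho>' Srem))"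
  have a'ge: "a' / r \<ge> 1 / (2 * real s)" using \<rho>'p by (simp add: cands_def a'_def r_def)
  then show a'ge2: "real (length (restrict_sample \<rho>' Srem)) \<ge> real (length Srem) / (2 * real s)"
    using rpos s_pos by (simp add: field_simps a'_def r_def)
  have a'pos: "a' > 0"
  proof -
    have "r / (2 * real s) > 0" using rpos s_pos by simp
    then show ?thesis using a'ge2 unfolding a'_def r_def by linarith
  qed
  define b where "b = (\<lambda>\<rho>. real (length (filter (\<lambda>(x, y). in_restr x \<rho> \<and> H \<rho> x \<noteq> y) Srem)))"
  have seb: "se \<rho> = b \<rho> / real (length (restrict_sample \<rho> Srem))" for \<rho>
  proof -
    have "filter (\<lambda>(x, y). H \<rho> x \<noteq> y) (restrict_sample \<rho> Srem) = filter (\<lambda>(x, y). in_restr x \<rho> \<and> H \<rho> x \<noteq> y) Srem"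
      unfolding restrict_sample_def by (simp add: filter_filter case_prod_unfold conj_commute)
    then show ?thesis by (simp add: se_def sample_error_def b_def)
  qed
  define w where "w = (\<lambda>i. if \<rho>s ! i \<in> cands then 1 else (0::real))"
  have key1: "b \<rho>' * (w i * a i) \<le> a' * (w i * b (\<rho>s ! i))" if "i < s" for i
  proof (cases "\<rho>s ! i \<in> cands")
    case True
    have aipos: "a i > 0"
    proof -
      have "a i / r \<ge> 1 / (2 * real s)" using True by (simp add: cands_def a_def r_def)
      moreover have "1 / (2 * real s) > 0" using s_pos by simp
      ultimately show ?thesis using rpos by (smt (verit) divide_nonpos_pos)
    qed
    have "se \<rho>' \<le> se (\<rho>s ! i)" using \<rho>'p True by blast
    then have "b \<rho>' / a' \<le> b (\<rho>s ! i) / a i" by (simp add: seb a'_def a_def)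
    then have "b \<rho>' * a i \<le> b (\<rho>s ! i) * a'" using a'pos aipos by (simp add: divide_le_eq le_divide_eq field_simps)
    then show ?thesis using True by (simp add: w_def algebra_simps)
  qed (simp add: w_def)
  have sumB: "(\<Sum>i<s. b (\<rho>s ! i)) \<le> real Wc"
  proof -
    have uniq2: "\<forall>z\<in>set Srem. \<forall>i<s. \<forall>j<s. (\<lambda>i (x, y). in_restr x (\<rho>s ! i) \<and> H (\<rho>s ! i) x \<noteq> y) i z \<and> (\<lambda>i (x, y). in_restr x (\<rho>s ! i) \<and> H (\<rho>s ! i) x \<noteq> y) j z \<longrightarrow> i = j"
      using disj by auto
    have "(\<Sum>i<s. length (filter ((\<lambda>i (x, y). in_restr x (\<rho>s ! i) \<and> H (\<rho>s ! i) x \<noteq> y) i) Srem)) =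
          length (filter (\<lambda>z. \<exists>i<s. (\<lambda>i (x, y). in_restr x (\<rho>s ! i) \<and> H (\<rho>s ! i) x \<noteq> y) i z) Srem)"
      by (rule sum_filter_unique[OF uniq2])
    also have "\<dots> \<le> Wc"
      unfolding Srem filter_filter Wc_def
      by (rule order_trans[OF length_filter_conj_le]) (simp add: case_prod_unfold)
    finally have "(\<Sum>i<s. length (filter ((\<lambda>i (x, y). in_restr x (\<rho>s ! i) \<and> H (\<rho>s ! i) x \<noteq> y) i) Srem)) \<le> Wc" .
    then have "real (\<Sum>i<s. length (filter ((\<lambda>i (x, y). in_restr x (\<rho>s ! i) \<and> H (\<rho>s ! i) x \<noteq> y) i) Srem)) \<le> real Wc"
      by (simp only: of_nat_le_iff)
    then show ?thesis unfolding b_def of_nat_sum by simp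
  qed
  have "r \<le> (\<Sum>i<s. w i * a i + r / (2 * real s))"
  proof -
    have "a i \<le> w i * a i + r / (2 * real s)" if "i < s" for i
    proof (cases "\<rho>s ! i \<in> cands")
      case False
      then have "\<not> a i / r \<ge> 1 / (2 * real s)" using pieces that by (simp add: cands_def a_def r_def)
      then have "a i < r / (2 * real s)" using rpos s_pos by (simp add: field_simps)
      then show ?thesis using False by (simp add: w_def)
    qed (use rpos s_pos in \<open>simp add: w_def\<close>)
    then have "(\<Sum>i<s. a i) \<le> (\<Sum>i<s. w i * a i + r / (2 * real s))" by (intro sum_mono) auto
    then show ?thesis using sumA by simp
  qed
  also have "\<dots> = (\<Sum>i<s. w i * a i) + r / 2" using s_pos by (simp add: sum.distrib)
  finally have rle: "r / 2 \<le> (\<Sum>i<s. w i * a i)" by simp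
  have bnn: "b \<rho>' \<ge> 0" by (simp add: b_def)
  have "b \<rho>' * (r / 2) \<le> b \<rho>' * (\<Sum>i<s. w i * a i)" by (rule mult_left_mono[OF rle bnn])
  also have "\<dots> = (\<Sum>i<s. b \<rho>' * (w i * a i))" by (simp add: sum_distrib_left)
  also have "\<dots> \<le> (\<Sum>i<s. a' * (w i * b (\<rho>s ! i)))" by (intro sum_mono key1) auto
  also have "\<dots> \<le> (\<Sum>i<s. a' * b (\<rho>s ! i))"
    using a'pos by (intro sum_mono) (auto simp: w_def b_def)
  also have "\<dots> = a' * (\<Sum>i<s. b (\<rho>s ! i))" by (simp add: sum_distrib_left)
  also have "\<dots> \<le> a' * real Wc" using sumB a'pos by (simp add: mult_left_mono)
  finally show "real (length (filter (\<lambda>(x, y). in_restr x \<rho>' \<and> H \<rho>' x \<noteq> y) Srem)) * real (length Srem)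
          \<le> 2 * real Wc * real (length (restrict_sample \<rho>' Srem))"
    by (simp add: b_def r_def a'_def algebra_simps)
qed

definition cw :: "restr list \<Rightarrow> nat" where
  "cw L = length (filter (\<lambda>(x, y). \<exists>v. subcube_list_hyp L H x = Some v \<and> v \<noteq> y) Stest)"

definition phi :: "real \<Rightarrow> real" where
  "phi r = (if r \<le> ea * real (length Stest) then 0 else ln (r / (ea * real (length Stest))) + 1)"

lemma phi_nonneg: "phi r \<ge> 0"
proof -
  have "r > ea * real (length Stest) \<Longrightarrow> ln (r / (ea * real (length Stest))) > 0"
  proof -
    assume a: "r > ea * real (length Stest)"
    have c: "ea * real (length Stest) > 0" using ea_pos ne by simp
    then have "1 < r / (ea * real (length Stest))" using a by (simp add: less_divide_eq)
    then show ?thesis by simp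
  qed
  then show ?thesis unfolding phi_def by auto
qed

lemma unc_append: "unc (L @ [\<rho>]) = (\<lambda>(x, y). subcube_list_hyp L H x = None \<and> \<not> in_restr x \<rho>)"
  by (auto simp: unc_def slh_append fun_eq_iff split: option.splits)

lemma cw_append:
  "cw (L @ [\<rho>]) = cw L + length (filter (\<lambda>(x, y). in_restr x \<rho> \<and> H \<rho> x \<noteq> y) (filter (unc L) Stest))"
proof -
  have "cw (L @ [\<rho>]) = length (filter (\<lambda>z. (\<lambda>(x, y). \<exists>v. subcube_list_hyp L H x = Some v \<and> v \<noteq> y) z \<or>
      (\<lambda>z. unc L z \<and> (\<lambda>(x, y). in_restr x \<rho> \<and> H \<rho> x \<noteq> y) z) z) Stest)"
    unfolding cw_def by (rule arg_cong[where f=length], rule filter_cong)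
       (auto simp: slh_append unc_def split: option.splits if_splits)
  also have "\<dots> = cw L + length (filter (\<lambda>z. unc L z \<and> (\<lambda>(x, y). in_restr x \<rho> \<and> H \<rho> x \<noteq> y) z) Stest)"
    unfolding cw_def by (rule length_filter_disj) (auto simp: unc_def)
  also have "filter (\<lambda>z. unc L z \<and> (\<lambda>(x, y). in_restr x \<rho> \<and> H \<rho> x \<noteq> y) z) Stest
      = filter (\<lambda>(x, y). in_restr x \<rho> \<and> H \<rho> x \<noteq> y) (filter (unc L) Stest)"
    by (simp add: filter_filter)
  finally show ?thesis .
qed

lemma loop:
  "Srem = filter (unc L) Stest \<Longrightarrow>
   (\<exists>L2. fsl_loop n d H ea s Stest k Srem L = L @ L2 \<and> set L2 \<subseteq> restrs n d \<and> length L2 \<le> k) \<and>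
   real (cw (fsl_loop n d H ea s Stest k Srem L)) \<le> real (cw L) + 2 * real Wc * phi (real (length Srem)) \<and>
   real (length (filter (unc (fsl_loop n d H ea s Stest k Srem L)) Stest))
     \<le> max (ea * real (length Stest)) (real (length Srem) * (1 - 1 / (2 * real s)) ^ k)"
proof (induction k arbitrary: L Srem)
  case 0
  have "real (length Srem) \<le> max (ea * real (length Stest)) (real (length Srem) * (1 - 1 / (2 * real s)) ^ 0)"
    by simp
  then show ?case using 0 phi_nonneg[of "real (length Srem)"] by auto
next
  case (Suc k)
  show ?case
  proof (cases "real (length Srem) / real (length Stest) \<le> ea")
    case True
    have "real (length Srem) \<le> ea * real (length Stest)" using True ne by (simp add: divide_le_eq)
    then show ?thesis using True Suc.prems phi_nonneg[of "real (length Srem)"] by auto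
  next
    case False
    define cands where "cands = {\<rho> \<in> restrs n d. real (length (restrict_sample \<rho> Srem)) / real (length Srem) \<ge> 1 / (2 * real s)}"
    define \<rho>' where "\<rho>' = (SOME \<rho>. \<rho> \<in> cands \<and> (\<forall>\<rho>2\<in>cands. sample_error (H \<rho>) (restrict_sample \<rho> Srem) \<le> sample_error (H \<rho>2) (restrict_sample \<rho>2 Srem)))"
    define Srem' where "Srem' = filter (\<lambda>(x, y). \<not> in_restr x \<rho>') Srem"
    have unf: "fsl_loop n d H ea s Stest (Suc k) Srem L = fsl_loop n d H ea s Stest k Srem' (L @ [\<rho>'])"
      using False by (simp add: Let_def cands_def \<rho>'_def Srem'_def)
    note st = step[OF Suc.prems False, folded cands_def, folded \<rho>'_def]
    have Srem'eq: "Srem' = filter (unc (L @ [\<rho>'])) Stest"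
      unfolding Srem'_def Suc.prems unc_append by (simp add: filter_filter unc_def case_prod_unfold)
    note IH = Suc.IH[OF Srem'eq]
    define r where "r = real (length Srem)"
    define a' where "a' = real (length (restrict_sample \<rho>' Srem))"
    define b' where "b' = real (length (filter (\<lambda>(x, y). in_restr x \<rho>' \<and> H \<rho>' x \<noteq> y) Srem))"
    have Npos: "real (length Stest) > 0" using ne by simp
    have rbig: "r > ea * real (length Stest)" using False Npos by (simp add: r_def divide_le_eq not_le)
    have rpos: "r > 0" using rbig ea_pos Npos by (smt (verit) mult_pos_pos)
    have a'ge: "a' \<ge> r / (2 * real s)" using st(2) by (simp add: a'_def r_def)
    have a'pos: "a' > 0" using a'ge rpos s_pos by (smt (verit) divide_pos_pos of_nat_0_less_iff)
    have lenSrem': "real (length Srem') = r - a'"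
    proof -
      have "length (filter (\<lambda>(x, y). in_restr x \<rho>') Srem) + length (filter (\<lambda>z. \<not> (\<lambda>(x, y). in_restr x \<rho>') z) Srem) = length Srem"
        by (rule sum_length_filter_compl)
      then show ?thesis by (simp add: Srem'_def a'_def r_def restrict_sample_def case_prod_unfold)
    qed
    have a'le: "a' \<le> r" using lenSrem' by (smt (verit) of_nat_0_le_iff)
    have bb: "b' * r \<le> 2 * real Wc * a'" using st(3) by (simp add: b'_def a'_def r_def)
    have cwL: "real (cw (L @ [\<rho>'])) = real (cw L) + b'"
      unfolding cw_append b'_def Suc.prems[symmetric] by simp
    have "real (cw (fsl_loop n d H ea s Stest (Suc k) Srem L)) \<le> real (cw (L @ [\<rho>'])) + 2 * real Wc * phi (r - a')"
      using IH unfolding unf lenSrem' by blast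
    also have "\<dots> = real (cw L) + (b' + 2 * real Wc * phi (r - a'))" using cwL by simp
    also have "b' + 2 * real Wc * phi (r - a') \<le> 2 * real Wc * (a' / r + phi (r - a'))"
    proof -
      have "b' \<le> 2 * real Wc * a' / r" using bb rpos by (simp add: le_divide_eq)
      then show ?thesis by (simp add: algebra_simps)
    qed
    also have "2 * real Wc * (a' / r + phi (r - a')) \<le> 2 * real Wc * phi r"
    proof (rule mult_left_mono)
      have c: "0 < ea * real (length Stest)" using ea_pos Npos by simp
      show "a' / r + phi (r - a') \<le> phi r"
        using phi_step[OF c a'pos a'le rbig] rbig unfolding phi_def by simp
    qed simp
    finally have part2: "real (cw (fsl_loop n d H ea s Stest (Suc k) Srem L)) \<le> real (cw L) + 2 * real Wc * phi (real (length Srem))"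
      by (simp add: r_def)
    define q where "q = 1 - 1 / (2 * real s)"
    have q0: "q \<ge> 0" using s_pos by (simp add: q_def field_simps)
    have "r - a' \<le> r * q" using a'ge s_pos by (simp add: q_def algebra_simps)
    then have "(r - a') * q ^ k \<le> r * q * q ^ k" by (rule mult_right_mono) (simp add: q0)
    then have "max (ea * real (length Stest)) ((r - a') * q ^ k) \<le> max (ea * real (length Stest)) (r * q ^ Suc k)"
      by (simp add: mult.assoc)
    then have part3: "real (length (filter (unc (fsl_loop n d H ea s Stest (Suc k) Srem L)) Stest))
     \<le> max (ea * real (length Stest)) (real (length Srem) * (1 - 1 / (2 * real s)) ^ Suc k)"
      using IH unfolding unf lenSrem' q_def r_def by linarith
    have part1: "\<exists>L2. fsl_loop n d H ea s Stest (Suc k) Srem L = L @ L2 \<and> set L2 \<subseteq> restrs n d \<and> length L2 \<le> Suc k"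
    proof -
      obtain L2 where "fsl_loop n d H ea s Stest k Srem' (L @ [\<rho>']) = (L @ [\<rho>']) @ L2" "set L2 \<subseteq> restrs n d" "length L2 \<le> k"
        using IH by blast
      then show ?thesis using st(1) unfolding unf by (intro exI[of _ "\<rho>' # L2"]) auto
    qed
    show ?thesis using part1 part2 part3 by blast
  qed
qed

lemma final_det:
  assumes ea1: "ea < 1"
  defines "L' \<equiv> find_subcube_list n d Stest H ea s"
  shows "set L' \<subseteq> restrs n d" and "length L' \<le> nat \<lceil>2 * real s * ln (1 / ea)\<rceil>"
    and "real (length (filter (\<lambda>(x, y). subcube_list_hyp L' H x \<noteq> Some y) Stest))
          \<le> 2 * real Wc * (ln (1 / ea) + 1) + ea * real (length Stest)"
proof -
  define T where "T = nat \<lceil>2 * real s * ln (1 / ea)\<rceil>"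
  have u0: "filter (unc []) Stest = Stest" by (simp add: unc_def)
  note lp = loop[OF u0[symmetric], of T]
  have L'eq: "L' = fsl_loop n d H ea s Stest T Stest []"
    by (simp add: L'_def find_subcube_list_def T_def)
  show "set L' \<subseteq> restrs n d" "length L' \<le> nat \<lceil>2 * real s * ln (1 / ea)\<rceil>"
    using lp unfolding L'eq T_def by auto
  have cw0: "cw [] = 0" by (simp add: cw_def)
  have Npos: "real (length Stest) > 0" using ne by simp
  have lnpos: "ln (1 / ea) > 0" using ea_pos ea1 by simp
  have phiN: "phi (real (length Stest)) \<le> ln (1 / ea) + 1"
  proof -
    have "real (length Stest) / (ea * real (length Stest)) = 1 / ea" using Npos by simp
    then show ?thesis unfolding phi_def using lnpos by auto
  qed
  have "real (cw L') \<le> 2 * real Wc * (ln (1 / ea) + 1)"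
  proof -
    have "real (cw L') \<le> 2 * real Wc * phi (real (length Stest))" using lp cw0 unfolding L'eq by simp
    also have "\<dots> \<le> 2 * real Wc * (ln (1 / ea) + 1)" by (rule mult_left_mono[OF phiN]) simp
    finally show ?thesis .
  qed
  moreover have "real (length (filter (unc L') Stest)) \<le> ea * real (length Stest)"
  proof -
    define x where "x = 1 / (2 * real s)"
    have x01: "0 \<le> x" "x \<le> 1" using s_pos by (auto simp: x_def field_simps)
    have "(1 - x) ^ T \<le> exp (- x) ^ T"
      by (rule power_mono) (use exp_ge_add_one_self[of "-x"] x01 in auto)
    also have "\<dots> = exp (- (real T * x))" by (simp add: exp_of_nat_mult[symmetric])
    also have "\<dots> \<le> exp (- ln (1 / ea))"
    proof -
      have "real T \<ge> 2 * real s * ln (1 / ea)" unfolding T_def by linarith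
      then have "real T * x \<ge> ln (1 / ea)" using s_pos by (simp add: x_def field_simps)
      then show ?thesis by simp
    qed
    also have "\<dots> = ea" using ea_pos by (simp add: ln_div exp_minus)
    finally have "(1 - x) ^ T \<le> ea" .
    then have "real (length Stest) * (1 - x) ^ T \<le> ea * real (length Stest)"
      using Npos by (simp add: mult.commute mult_left_mono)
    then show ?thesis using lp unfolding L'eq x_def by linarith
  qed
  moreover have "length (filter (\<lambda>(x, y). subcube_list_hyp L' H x \<noteq> Some y) Stest) = cw L' + length (filter (unc L') Stest)"
  proof -
    have "filter (\<lambda>(x, y). subcube_list_hyp L' H x \<noteq> Some y) Stest =
       filter (\<lambda>z. (\<lambda>(x, y). \<exists>v. subcube_list_hyp L' H x = Some v \<and> v \<noteq> y) z \<or> unc L' z) Stest"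
      by (rule filter_cong) (auto simp: unc_def)
    then show ?thesis unfolding cw_def by (simp add: length_filter_disj unc_def case_prod_unfold)
  qed
  ultimately show "real (length (filter (\<lambda>(x, y). subcube_list_hyp L' H x \<noteq> Some y) Stest))
          \<le> 2 * real Wc * (ln (1 / ea) + 1) + ea * real (length Stest)" by simp
qed

end


lemma test_bound:
  fixes P :: "(point \<times> bool) pmf" and H :: "restr \<Rightarrow> hyp"
  assumes N: "0 < N" and ea: "0 < ea" "ea < 1" and s_pos: "0 < s" and len: "length \<rho>s = s"
    and pieces: "\<forall>i<s. \<rho>s ! i \<in> restrs n d"
    and coverP: "\<forall>z\<in>set_pmf P. \<exists>i<s. in_restr (fst z) (\<rho>s ! i)"
    and disj: "\<forall>i<s. \<forall>j<s. i \<noteq> j \<longrightarrow> \<not> (\<exists>x. in_restr x (\<rho>s ! i) \<and> in_restr x (\<rho>s ! j))"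
  defines "\<Lambda> \<equiv> {L. set L \<subseteq> restrs n d \<and> length L \<le> nat \<lceil>2 * real s * ln (1 / ea)\<rceil>}"
  shows "measure_pmf.expectation (replicate_pmf N P)
           (\<lambda>Ste. error_opt (subcube_list_hyp (find_subcube_list n d Ste H ea s) H) P)
         \<le> 4 * (ln (1 / ea) + 1) * measure_pmf.prob P {(x, y). \<exists>i<s. in_restr x (\<rho>s ! i) \<and> H (\<rho>s ! i) x \<noteq> y}
           + 3 * ea + real (card \<Lambda>) * exp (- real N * ea / 2)"
proof -
  define F where "F = (\<lambda>L. {(x, y). subcube_list_hyp L H x \<noteq> Some y})"
  define cntF where "cntF = (\<lambda>L Ste. real (length (filter (\<lambda>(x, y). subcube_list_hyp L H x \<noteq> Some y) Ste)))"
  define Wp where "Wp = (\<lambda>(x, y). \<exists>i<s. in_restr x (\<rho>s ! i) \<and> H (\<rho>s ! i) x \<noteq> y)"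
  define bad where "bad = (\<lambda>Ste. \<exists>L\<in>\<Lambda>. measure_pmf.prob P (F L) > 2 * cntF L Ste / real N + ea)"
  define Lg where "Lg = ln (1 / ea)"
  have finL: "finite \<Lambda>" unfolding \<Lambda>_def by (rule finite_lists_length_le[OF finite_restrs])
  have pw: "error_opt (subcube_list_hyp (find_subcube_list n d Ste H ea s) H) P
       \<le> 4 * (Lg + 1) * real (length (filter Wp Ste)) / real N + 3 * ea + (if bad Ste then 1 else 0)"
    if Ste: "Ste \<in> set_pmf (replicate_pmf N P)" for Ste
  proof -
    have lenS: "length Ste = N" and setS: "set Ste \<subseteq> set_pmf P" using Ste by (auto simp: set_replicate_pmf)
    have ne: "Ste \<noteq> []" using lenS N by auto
    have cov: "\<forall>z\<in>set Ste. \<exists>i<s. in_restr (fst z) (\<rho>s ! i)" using coverP setS by blast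
    note fd = final_det[OF ne ea(1) s_pos len pieces cov disj ea(2), of H]
    note Wc_eq = Wc_def[OF ne ea(1) s_pos len pieces cov disj, of H]
    define L' where "L' = find_subcube_list n d Ste H ea s"
    have L'in: "L' \<in> \<Lambda>" using fd(1,2) unfolding \<Lambda>_def L'_def by auto
    have errF: "error_opt (subcube_list_hyp L' H) P = measure_pmf.prob P (F L')"
      by (simp add: error_opt_def F_def)
    have c1: "cntF L' Ste \<le> 2 * real (length (filter Wp Ste)) * (Lg + 1) + ea * real N"
      using fd(3) unfolding cntF_def L'_def Lg_def Wc_eq Wp_def lenS by simp
    have nonneg: "0 \<le> 4 * (Lg + 1) * real (length (filter Wp Ste)) / real N"
    proof -
      have "Lg > 0" using ea by (simp add: Lg_def)
      then show ?thesis by simp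
    qed
    show ?thesis
    proof (cases "bad Ste")
      case True
      have "error_opt (subcube_list_hyp L' H) P \<le> 1" by (simp add: errF)
      then show ?thesis using True nonneg ea L'_def by simp
    next
      case False
      then have "measure_pmf.prob P (F L') \<le> 2 * cntF L' Ste / real N + ea"
        using L'in unfolding bad_def by force
      also have "\<dots> \<le> 2 * (2 * real (length (filter Wp Ste)) * (Lg + 1) + ea * real N) / real N + ea"
        using c1 N by (simp add: divide_right_mono)
      also have "\<dots> = 4 * (Lg + 1) * real (length (filter Wp Ste)) / real N + 3 * ea"
        using N by (simp add: field_simps)
      finally show ?thesis using False errF L'_def by simp
    qed
  qed
  have Lgpos: "Lg > 0" using ea by (simp add: Lg_def)
  have i1: "integrable (measure_pmf (replicate_pmf N P)) (\<lambda>Ste. 4 * (Lg + 1) / real N * real (length (filter Wp Ste)))"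
  proof (rule integrable_pmf_bounded[where B="4 * (Lg + 1)"])
    fix S assume "S \<in> set_pmf (replicate_pmf N P)"
    then have "length S = N" by (simp add: set_replicate_pmf)
    then have "real (length (filter Wp S)) \<le> real N" using length_filter_le[of Wp S] by simp
    then have "4 * (Lg + 1) / real N * real (length (filter Wp S)) \<le> 4 * (Lg + 1) / real N * real N"
      using Lgpos by (intro mult_left_mono) auto
    then show "\<bar>4 * (Lg + 1) / real N * real (length (filter Wp S))\<bar> \<le> 4 * (Lg + 1)"
      using N Lgpos by simp
  qed
  have i2: "integrable (measure_pmf (replicate_pmf N P)) (\<lambda>Ste. if bad Ste then 1 else 0 :: real)"
    by (rule integrable_pmf_bounded[where B=1]) simp
  have "measure_pmf.expectation (replicate_pmf N P)
           (\<lambda>Ste. error_opt (subcube_list_hyp (find_subcube_list n d Ste H ea s) H) P)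
     \<le> measure_pmf.expectation (replicate_pmf N P)
           (\<lambda>Ste. 4 * (Lg + 1) / real N * real (length (filter Wp Ste)) + 3 * ea + (if bad Ste then 1 else 0))"
  proof (rule integral_mono_AE)
    show "integrable (measure_pmf (replicate_pmf N P))
           (\<lambda>Ste. error_opt (subcube_list_hyp (find_subcube_list n d Ste H ea s) H) P)"
      by (rule integrable_pmf_bounded[where B=1]) (simp add: error_opt_def)
    show "integrable (measure_pmf (replicate_pmf N P))
           (\<lambda>Ste. 4 * (Lg + 1) / real N * real (length (filter Wp Ste)) + 3 * ea + (if bad Ste then 1 else 0))"
      using i1 i2 by (intro Bochner_Integration.integrable_add) auto
    show "AE Ste in measure_pmf (replicate_pmf N P).
      error_opt (subcube_list_hyp (find_subcube_list n d Ste H ea s) H) P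
      \<le> 4 * (Lg + 1) / real N * real (length (filter Wp Ste)) + 3 * ea + (if bad Ste then 1 else 0)"
      using pw by (auto simp: AE_measure_pmf_iff)
  qed
  also have "\<dots> = 4 * (Lg + 1) / real N * measure_pmf.expectation (replicate_pmf N P) (\<lambda>Ste. real (length (filter Wp Ste)))
       + 3 * ea + measure_pmf.prob (replicate_pmf N P) {Ste. bad Ste}"
    using i1 i2 by (simp add: Bochner_Integration.integral_add expectation_indicator_pmf)
  also have "measure_pmf.expectation (replicate_pmf N P) (\<lambda>Ste. real (length (filter Wp Ste))) = real N * measure_pmf.prob P {z. Wp z}"
    by (rule expectation_replicate_count)
  also have "measure_pmf.prob (replicate_pmf N P) {Ste. bad Ste} \<le> real (card \<Lambda>) * exp (- real N * ea / 2)"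
  proof -
    have "{Ste. bad Ste} = (\<Union>L\<in>\<Lambda>. {Ste. measure_pmf.prob P (F L) > 2 * cntF L Ste / real N + ea})"
      unfolding bad_def by auto
    then have "measure_pmf.prob (replicate_pmf N P) {Ste. bad Ste} \<le>
        (\<Sum>L\<in>\<Lambda>. measure_pmf.prob (replicate_pmf N P) {Ste. measure_pmf.prob P (F L) > 2 * cntF L Ste / real N + ea})"
      using measure_pmf.finite_measure_subadditive_finite[OF finL, of "\<lambda>L. {Ste. measure_pmf.prob P (F L) > 2 * cntF L Ste / real N + ea}" "replicate_pmf N P"]
      by simp
    also have "\<dots> \<le> (\<Sum>L\<in>\<Lambda>. exp (- real N * ea / 2))"
    proof (rule sum_mono)
      fix L
      define q where "q = measure_pmf.prob P (F L)"
      have "{Ste. q > 2 * cntF L Ste / real N + ea} \<subseteq>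
            {Ste. real (length (filter (\<lambda>(x, y). subcube_list_hyp L H x \<noteq> Some y) Ste)) \<le> real N * (q - ea) / 2}"
        using N by (auto simp: cntF_def field_simps)
      then have "measure_pmf.prob (replicate_pmf N P) {Ste. q > 2 * cntF L Ste / real N + ea}
          \<le> measure_pmf.prob (replicate_pmf N P) {Ste. real (length (filter (\<lambda>(x, y). subcube_list_hyp L H x \<noteq> Some y) Ste)) \<le> real N * (q - ea) / 2}"
        by (rule measure_pmf.finite_measure_mono) simp
      also have "\<dots> \<le> exp (real N * (q - ea) / 2 - real N * measure_pmf.prob P {z. (\<lambda>(x, y). subcube_list_hyp L H x \<noteq> Some y) z} / 2)"
        by (rule count_tail)
      also have "\<dots> = exp (- real N * ea / 2)"
        by (simp add: q_def F_def case_prod_unfold algebra_simps diff_divide_distrib)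
      finally show "measure_pmf.prob (replicate_pmf N P) {Ste. measure_pmf.prob P (F L) > 2 * cntF L Ste / real N + ea} \<le> exp (- real N * ea / 2)"
        by (simp add: q_def)
    qed
    also have "\<dots> = real (card \<Lambda>) * exp (- real N * ea / 2)" by simp
    finally show ?thesis .
  qed
  finally show ?thesis using N by (simp add: Lg_def Wp_def)
qed


lemma real_tail_aux:
  fixes p N m \<pi> :: real
  assumes "0 \<le> p" "0 < N" "1 \<le> m" "0 \<le> \<pi>" "\<pi> \<le> 1" "\<pi> \<le> exp (m - N * p / 2)"
  shows "p * \<pi> \<le> 4 * m / N"
proof (cases "N * p \<le> 4 * m")
  case True
  have "p * \<pi> \<le> p" using assms by (simp add: mult_left_le)
  also have "p \<le> 4 * m / N" using True assms by (simp add: le_divide_eq mult.commute)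
  finally show ?thesis .
next
  case False
  define y where "y = N * p / 4"
  have "m - N * p / 2 \<le> - y" using False by (simp add: y_def)
  then have "\<pi> \<le> exp (- y)" using assms(6) by (meson exp_le_cancel_iff order_trans)
  then have "p * \<pi> \<le> p * exp (- y)" using assms by (simp add: mult_left_mono)
  also have "p * exp (- y) = 4 / N * (y * exp (- y))" using assms by (simp add: y_def field_simps)
  also have "y * exp (- y) \<le> 1"
  proof -
    have "y \<le> exp y" using exp_ge_add_one_self[of y] by linarith
    then show ?thesis by (simp add: exp_minus field_simps)
  qed
  then have "4 / N * (y * exp (- y)) \<le> 4 / N * 1" by (rule mult_left_mono) (use assms in auto)
  then have "4 / N * (y * exp (- y)) \<le> 4 / N" by simp
  also have "4 / N \<le> 4 * m / N" using assms by (simp add: divide_right_mono)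
  finally show ?thesis .
qed

lemma piece_bound:
  fixes D :: "point pmf" and f :: "point \<Rightarrow> bool" and A :: "sample \<Rightarrow> hyp"
  assumes fin: "finite (set_pmf D)" and N: "0 < m \<Longrightarrow> 0 < N"
    and learn: "measure_pmf.prob D {x. in_restr x \<rho>} > 0 \<Longrightarrow>
       measure_pmf.expectation (replicate_pmf m (labeled (restrict_pmf D \<rho>) f)) (\<lambda>S. error (A S) (labeled (restrict_pmf D \<rho>) f)) \<le> eps'"
    and uf: "uses_first m A"
  shows "measure_pmf.expectation (replicate_pmf N (labeled D f))
           (\<lambda>Str. measure_pmf.prob (labeled D f) {(x, y). in_restr x \<rho> \<and> A (restrict_sample \<rho> Str) x \<noteq> y})
         \<le> measure_pmf.prob D {x. in_restr x \<rho>} * eps' + 4 * real m / real N"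
proof -
  define P where "P = labeled D f"
  define p where "p = measure_pmf.prob D {x. in_restr x \<rho>}"
  define Q where "Q = (\<lambda>(x::point, y::bool). in_restr x \<rho>)"
  have pP: "measure_pmf.prob P {z. Q z} = p"
    by (simp add: P_def p_def labeled_def Q_def measure_map_pmf vimage_def)
  have finP: "finite (set_pmf P)" using fin by (simp add: P_def labeled_def)
  have m0: "0 \<le> 4 * real m / real N" by simp
  show ?thesis
  proof (cases "p > 0")
    case False
    then have p0: "p = 0" by (simp add: p_def not_less measure_le_0_iff)
    have "measure_pmf.expectation (replicate_pmf N P)
           (\<lambda>Str. measure_pmf.prob P {(x, y). in_restr x \<rho> \<and> A (restrict_sample \<rho> Str) x \<noteq> y}) \<le> 0"
    proof (rule measure_pmf.integral_le_const)
      show "integrable (measure_pmf (replicate_pmf N P)) (\<lambda>Str. measure_pmf.prob P {(x, y). in_restr x \<rho> \<and> A (restrict_sample \<rho> Str) x \<noteq> y})"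
        by (rule integrable_pmf_bounded[where B=1]) simp
      have "measure_pmf.prob P {(x, y). in_restr x \<rho> \<and> A (restrict_sample \<rho> Str) x \<noteq> y} \<le> measure_pmf.prob P {z. Q z}" for Str
        by (rule measure_pmf.finite_measure_mono) (auto simp: Q_def)
      then show "AE Str in measure_pmf (replicate_pmf N P). measure_pmf.prob P {(x, y). in_restr x \<rho> \<and> A (restrict_sample \<rho> Str) x \<noteq> y} \<le> 0"
        using pP p0 by simp
    qed
    moreover have "p * eps' + 4 * real m / real N \<ge> 0" using p0 m0 by simp
    ultimately show ?thesis unfolding P_def p_def by linarith
  next
    case True
    define Dr where "Dr = labeled (restrict_pmf D \<rho>) f"
    have ne: "set_pmf P \<inter> {z. Q z} \<noteq> {}"
    proof
      assume "set_pmf P \<inter> {z. Q z} = {}"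
      then have "measure_pmf.prob P {z. Q z} = 0" by (simp add: measure_pmf_zero_iff)
      then show False using True pP by simp
    qed
    have condeq: "cond_pmf P {z. Q z} = Dr"
    proof -
      have ne': "set_pmf D \<inter> (\<lambda>x. (x, f x)) -` {z. Q z} \<noteq> {}" using ne by (auto simp: P_def labeled_def)
      show ?thesis unfolding P_def labeled_def Dr_def restrict_pmf_def
        by (subst cond_map_pmf[OF ne']) (simp add: Q_def vimage_def)
    qed
    define g where "g = (\<lambda>T. error (A T) Dr)"
    have g01: "0 \<le> g T" "g T \<le> 1" for T by (auto simp: g_def error_def)
    have eqp: "measure_pmf.prob P {(x, y). in_restr x \<rho> \<and> A (restrict_sample \<rho> Str) x \<noteq> y} = p * g (restrict_sample \<rho> Str)" for Str
    proof -
      define R where "R = {(x::point, y::bool). A (restrict_sample \<rho> Str) x \<noteq> y}"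
      have "measure_pmf.prob P {(x, y). in_restr x \<rho> \<and> A (restrict_sample \<rho> Str) x \<noteq> y}
          = measure_pmf.expectation P (\<lambda>z. indicator {z. Q z} z * indicator R z)"
        by (simp add: Q_def R_def indicator_inter_arith[symmetric] Int_def case_prod_unfold)
      also have "\<dots> = p * measure_pmf.expectation Dr (indicator R)"
        using expectation_cond_split[OF finP ne, of "indicator R"] by (simp add: pP condeq)
      also have "measure_pmf.expectation Dr (indicator R) = g (restrict_sample \<rho> Str)"
        by (simp add: g_def error_def R_def)
      finally show ?thesis .
    qed
    define cnt where "cnt = (\<lambda>S. length (filter Q S))"
    have rs: "restrict_sample \<rho> S = filter Q S" for S by (simp add: restrict_sample_def Q_def)
    have pw: "g (restrict_sample \<rho> S) \<le> (if m \<le> cnt S then g (take m (filter Q S)) else 0) + (if cnt S < m then 1 else 0)" for S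
    proof (cases "m \<le> cnt S")
      case True
      then have "A (restrict_sample \<rho> S) = A (take m (filter Q S))"
        using uf unfolding uses_first_def rs cnt_def by blast
      then show ?thesis using True by (simp add: g_def)
    next
      case False
      then show ?thesis using g01 by simp
    qed
    have iA: "integrable (measure_pmf (replicate_pmf N P)) (\<lambda>S. if m \<le> cnt S then g (take m (filter Q S)) else 0)"
      by (rule integrable_pmf_bounded[where B=1]) (use g01 in \<open>auto simp: abs_le_iff\<close>)
    have iB: "integrable (measure_pmf (replicate_pmf N P)) (\<lambda>S. if cnt S < m then 1 else 0 :: real)"
      by (rule integrable_pmf_bounded[where B=1]) auto
    have Eg: "measure_pmf.expectation (replicate_pmf N P) (\<lambda>S. g (restrict_sample \<rho> S))
        \<le> eps' + measure_pmf.prob (replicate_pmf N P) {S. cnt S < m}"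
    proof -
      have "measure_pmf.expectation (replicate_pmf N P) (\<lambda>S. g (restrict_sample \<rho> S))
         \<le> measure_pmf.expectation (replicate_pmf N P) (\<lambda>S. (if m \<le> cnt S then g (take m (filter Q S)) else 0) + (if cnt S < m then 1 else 0))"
        by (rule integral_mono) (use pw iA iB in \<open>auto intro!: integrable_pmf_bounded[where B=1] simp: g01 abs_le_iff\<close>)
      also have "\<dots> = measure_pmf.expectation (replicate_pmf N P) (\<lambda>S. if m \<le> cnt S then g (take m (filter Q S)) else 0)
          + measure_pmf.prob (replicate_pmf N P) {S. cnt S < m}"
        using iA iB by (simp add: expectation_indicator_pmf)
      also have "measure_pmf.expectation (replicate_pmf N P) (\<lambda>S. if m \<le> cnt S then g (take m (filter Q S)) else 0)
          \<le> measure_pmf.expectation (replicate_pmf m (cond_pmf P {z. Q z})) g"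
        unfolding cnt_def by (rule filter_take_bound[OF finP ne]) (use g01 in auto)
      also have "\<dots> \<le> eps'" using learn True unfolding condeq g_def Dr_def p_def by simp
      finally show ?thesis by simp
    qed
    have tail: "p * measure_pmf.prob (replicate_pmf N P) {S. cnt S < m} \<le> 4 * real m / real N"
    proof (cases "m = 0")
      case True
      then show ?thesis using N by simp
    next
      case False
      have "measure_pmf.prob (replicate_pmf N P) {S. cnt S < m} \<le> measure_pmf.prob (replicate_pmf N P) {S. real (cnt S) \<le> real m}"
        by (rule measure_pmf.finite_measure_mono) auto
      also have "\<dots> \<le> exp (real m - real N * p / 2)"
        using count_tail[of N P Q "real m"] pP by (simp add: cnt_def)
      finally have "measure_pmf.prob (replicate_pmf N P) {S. cnt S < m} \<le> exp (real m - real N * p / 2)" .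
      then show ?thesis using False N True
        by (intro real_tail_aux) (auto simp: P_def)
    qed
    have "measure_pmf.expectation (replicate_pmf N P)
           (\<lambda>Str. measure_pmf.prob P {(x, y). in_restr x \<rho> \<and> A (restrict_sample \<rho> Str) x \<noteq> y})
       = p * measure_pmf.expectation (replicate_pmf N P) (\<lambda>S. g (restrict_sample \<rho> S))"
      unfolding eqp by simp
    also have "\<dots> \<le> p * (eps' + measure_pmf.prob (replicate_pmf N P) {S. cnt S < m})"
      using Eg True by (simp add: mult_left_mono)
    also have "\<dots> \<le> p * eps' + 4 * real m / real N" using tail by (simp add: algebra_simps)
    finally show ?thesis by (simp add: P_def p_def)
  qed
qed


lemma depth_Cons: "depth (c # \<rho>) = (if c = None then 0 else 1) + depth \<rho>"
  by (simp add: depth_def)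

lemma card_restrs: "card (restrs n d) \<le> (2 * n + 1) ^ d"
proof (induction n arbitrary: d)
  case 0
  have "restrs 0 d = {[]}" by (auto simp: restrs_def depth_def)
  then show ?case by simp
next
  case (Suc n)
  show ?case
  proof (cases d)
    case 0
    have "restrs (Suc n) 0 \<subseteq> (\<lambda>\<rho>. None # \<rho>) ` restrs n 0"
    proof
      fix \<rho> assume "\<rho> \<in> restrs (Suc n) 0"
      then obtain c \<rho>0 where "\<rho> = c # \<rho>0" "length \<rho>0 = n" "depth (c # \<rho>0) \<le> 0"
        by (auto simp: restrs_def length_Suc_conv)
      then show "\<rho> \<in> (\<lambda>\<rho>. None # \<rho>) ` restrs n 0"
        by (auto simp: restrs_def depth_Cons split: if_splits)
    qed
    then have "card (restrs (Suc n) 0) \<le> card ((\<lambda>\<rho>. None # \<rho>) ` restrs n 0)"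
      by (intro card_mono finite_imageI finite_restrs)
    also have "\<dots> \<le> card (restrs n 0)" by (rule card_image_le[OF finite_restrs])
    also have "\<dots> \<le> 1" using Suc.IH[of 0] by simp
    finally show ?thesis using 0 by simp
  next
    case (Suc d')
    have "restrs (Suc n) d \<subseteq> (\<lambda>\<rho>. None # \<rho>) ` restrs n d \<union> ((\<lambda>\<rho>. Some True # \<rho>) ` restrs n d' \<union> (\<lambda>\<rho>. Some False # \<rho>) ` restrs n d')"
    proof
      fix \<rho> assume "\<rho> \<in> restrs (Suc n) d"
      then obtain c \<rho>0 where "\<rho> = c # \<rho>0" "length \<rho>0 = n" "depth (c # \<rho>0) \<le> d"
        by (auto simp: restrs_def length_Suc_conv)
      then show "\<rho> \<in> (\<lambda>\<rho>. None # \<rho>) ` restrs n d \<union> ((\<lambda>\<rho>. Some True # \<rho>) ` restrs n d' \<union> (\<lambda>\<rho>. Some False # \<rho>) ` restrs n d')"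
        using Suc by (cases c) (auto simp: restrs_def depth_Cons)
    qed
    then have "card (restrs (Suc n) d) \<le> card ((\<lambda>\<rho>. None # \<rho>) ` restrs n d \<union> ((\<lambda>\<rho>. Some True # \<rho>) ` restrs n d' \<union> (\<lambda>\<rho>. Some False # \<rho>) ` restrs n d'))"
      by (intro card_mono finite_imageI finite_restrs finite_UnI)
    also have "\<dots> \<le> card (restrs n d) + (card (restrs n d') + card (restrs n d'))"
      by (intro order_trans[OF card_Un_le] add_mono card_image_le finite_restrs order_refl)
    also have "\<dots> \<le> (2 * n + 1) ^ d + 2 * (2 * n + 1) ^ d'"
      using Suc.IH[of d] Suc.IH[of d'] by simp
    also have "\<dots> = (2 * n + 3) * (2 * n + 1) ^ d'" using Suc by (simp add: algebra_simps)
    also have "\<dots> \<le> (2 * Suc n + 1) * (2 * Suc n + 1) ^ d'"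
      by (intro mult_mono power_mono) auto
    finally show ?thesis using Suc by simp
  qed
qed

lemma restrs_nonempty: "replicate n None \<in> restrs n d"
  by (simp add: restrs_def depth_def)


lemma ln2_half: "ln (2::real) \<ge> 1 / 2"
proof -
  have "exp (1/2::real) ^ 2 = exp 1" by (simp add: exp_of_nat_mult[symmetric])
  also have "\<dots> \<le> 3" by (rule exp_le)
  finally have "exp (1/2::real) ^ 2 \<le> 2 ^ 2" by simp
  then have "exp (1/2::real) \<le> 2" by (rule power2_le_imp_le) simp
  then have "ln (exp (1/2::real)) \<le> ln 2" by (subst ln_le_cancel_iff) auto
  then show ?thesis by simp
qed

lemma test_arith:
  fixes n d s T N K :: nat and eps :: real
  assumes n: "2 \<le> n" and d: "1 \<le> d" and s: "1 \<le> s" and eps: "0 < eps" "eps < 1"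
    and Lg: "ln (1 / eps) \<ge> 1" and T: "T = nat \<lceil>2 * real s * ln (1 / eps)\<rceil>"
    and K: "1 \<le> K" "K \<le> (2 * n + 1) ^ d"
    and N: "real N \<ge> 40 * (real s * real d * ln (real n) * ln (1 / eps) ^ 3 / eps ^ 2)"
  shows "real (\<Sum>i\<le>T. K ^ i) * exp (- real N * eps / 2) \<le> eps"
proof -
  define L where "L = ln (1 / eps)"
  define ln' where "ln' = ln (real n)"
  have lnn: "ln' \<ge> 1 / 2"
  proof -
    have "ln (real n) \<ge> ln 2" using n by simp
    then show ?thesis using ln2_half by (simp add: ln'_def)
  qed
  define a where "a = real s * L"
  define b where "b = real d * ln'"
  have s1: "real s \<ge> 1" using s by simp
  have d1: "real d \<ge> 1" using d by simp
  have a1: "a \<ge> 1" using mult_mono[OF s1 Lg] by (simp add: a_def L_def)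
  have b1: "b \<ge> 1 / 2" using mult_mono[OF d1 lnn] by (simp add: b_def)
  have Tle: "real T \<le> 3 * a"
  proof -
    have x0: "2 * real s * L \<ge> 0" using a1 unfolding a_def by linarith
    have "real T = real_of_int \<lceil>2 * real s * L\<rceil>" unfolding T L_def[symmetric] using x0 by simp
    also have "\<dots> \<le> 2 * real s * L + 1" by (rule of_int_ceiling_le_add_one)
    finally have "real T \<le> 2 * real s * L + 1" .
    then show ?thesis using a1 by (simp add: a_def)
  qed
  have sumle: "real (\<Sum>i\<le>T. K ^ i) \<le> (real T + 1) * real K ^ T"
  proof -
    have "(\<Sum>i\<le>T. K ^ i) \<le> (\<Sum>i\<le>T. K ^ T)" by (intro sum_mono power_increasing) (use K in auto)
    then have "real (\<Sum>i\<le>T. K ^ i) \<le> real (\<Sum>i\<le>T. K ^ T)" by (simp only: of_nat_le_iff)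
    then show ?thesis by (simp add: algebra_simps)
  qed
  have Kle: "real K \<le> exp (3 * b)"
  proof -
    have "real (2 * n + 1) \<le> real n ^ 3"
    proof -
      have "2 * 2 \<le> n * n" using mult_le_mono[OF n n] .
      then have "2 * 2 * n \<le> n * n * n" by (rule mult_le_mono1)
      then have "2 * n + 1 \<le> n * n * n" using n by linarith
      then show ?thesis by (simp add: power3_eq_cube of_nat_mult[symmetric] del: of_nat_mult)
    qed
    then have "real (2 * n + 1) ^ d \<le> (real n ^ 3) ^ d" by (rule power_mono) simp
    moreover have "real K \<le> real (2 * n + 1) ^ d" using K(2) by (metis of_nat_le_iff of_nat_power)
    ultimately have "real K \<le> (real n ^ 3) ^ d" by linarith
    also have "\<dots> = exp (ln (real n)) ^ (3 * d)" using n by (simp add: power_mult)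
    also have "\<dots> = exp (real (3 * d) * ln (real n))" by (rule exp_of_nat_mult[symmetric])
    also have "\<dots> = exp (3 * b)" by (simp add: b_def ln'_def)
    finally show ?thesis .
  qed
  have "real K ^ T \<le> exp (3 * b) ^ T" by (rule power_mono[OF Kle]) simp
  also have "\<dots> = exp (real T * 3 * b)" by (simp add: exp_of_nat_mult[symmetric] mult.assoc)
  finally have KT: "real K ^ T \<le> exp (real T * 3 * b)" .
  have T1: "real T + 1 \<le> exp (real T)" using exp_ge_add_one_self[of "real T"] by linarith
  define X where "X = real N * eps / 2"
  have Xge: "X \<ge> 20 * a * b"
  proof -
    have L2: "L ^ 2 \<ge> 1" using Lg by (simp add: L_def one_le_power)
    have ie: "1 / eps \<ge> 1" using eps by simp
    have "L ^ 2 * 1 \<le> L ^ 2 * (1 / eps)" by (rule mult_left_mono[OF ie]) simp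
    then have "L ^ 2 / eps \<ge> 1" using L2 by simp
    have A: "X \<ge> 20 * (real s * real d * ln' * L ^ 3 / eps)" using N eps by (simp add: X_def L_def ln'_def power2_eq_square field_simps)
    have B: "real s * real d * ln' * L ^ 3 / eps = (a * b) * (L ^ 2 / eps)" by (simp add: a_def b_def power3_eq_cube power2_eq_square)
    have C: "(a * b) * 1 \<le> (a * b) * (L ^ 2 / eps)" using \<open>L ^ 2 / eps \<ge> 1\<close> a1 b1 by (intro mult_left_mono) auto
    show ?thesis using A B C by linarith
  qed
  have expo: "real T + real T * 3 * b - X \<le> - L"
  proof -
    have "real T * (1 + 3 * b) \<le> 3 * a * (1 + 3 * b)" using Tle b1 by (intro mult_right_mono) auto
    also have "\<dots> \<le> 15 * a * b"
    proof -
      have "3 * a * 1 \<le> 3 * a * (2 * b)" using a1 b1 by (intro mult_left_mono) auto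
      then show ?thesis by (simp add: algebra_simps)
    qed
    finally have "real T + real T * 3 * b \<le> 15 * a * b" by (simp add: algebra_simps)
    moreover have "L \<le> 2 * a * b"
    proof -
      have "1 * L \<le> real s * L" using s1 Lg by (intro mult_right_mono) (auto simp: L_def)
      then have "L \<le> a" by (simp add: a_def)
      also have "a * 1 \<le> a * (2 * b)" using a1 b1 by (intro mult_left_mono) auto
      then have "a \<le> 2 * a * b" by (simp add: algebra_simps)
      finally show ?thesis .
    qed
    moreover have "15*a*b = 15*(a*b)" "2*a*b = 2*(a*b)" "20*a*b = 20*(a*b)" by simp_all
    moreover have "a * b \<ge> 0" using a1 b1 by simp
    ultimately show ?thesis using Xge by linarith
  qed
  have "real (\<Sum>i\<le>T. K ^ i) * exp (- real N * eps / 2) \<le> (real T + 1) * real K ^ T * exp (- X)"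
    using sumle by (simp add: X_def)
  also have "\<dots> \<le> exp (real T) * exp (real T * 3 * b) * exp (- X)"
    by (intro mult_right_mono mult_mono T1 KT) auto
  also have "\<dots> = exp (real T + real T * 3 * b - X)" by (simp add: exp_add[symmetric] exp_diff exp_minus field_simps)
  also have "\<dots> \<le> exp (- L)" using expo by simp
  also have "\<dots> = eps" using eps by (simp add: L_def ln_div exp_minus)
  finally show ?thesis .
qed


lemma expectation_pair_pmf_bounded:
  fixes f :: "'a \<times> 'b \<Rightarrow> real"
  assumes "\<And>z. \<bar>f z\<bar> \<le> B"
  shows "measure_pmf.expectation (pair_pmf M1 M2) f = measure_pmf.expectation M1 (\<lambda>a. measure_pmf.expectation M2 (\<lambda>b. f (a, b)))"
  unfolding pair_pmf_def
  apply (subst expectation_bind_pmf_bounded[OF assms])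
  apply (rule expectation_cong_pmf)
  apply (subst expectation_bind_pmf_bounded[OF assms])
  apply simp
  done

lemma main_bound:
  fixes n :: nat and C :: "(point \<Rightarrow> bool) set" and \<D> :: "point pmf set" and Dstar :: "point pmf"
    and d s :: nat and eps :: real and A :: "sample \<Rightarrow> hyp" and m :: nat and f :: "point \<Rightarrow> bool"
  assumes n: "2 \<le> n" and d: "1 \<le> d" and eps: "0 < eps" "eps < 1" and supp: "set_pmf Dstar \<subseteq> {x. length x = n}"
    and part: "has_subcube_partition n d s Dstar \<D>" and learn: "learns A C \<D> m (eps / ln (1 / eps))"
    and uf: "uses_first m A" and fC: "f \<in> C"
  shows "measure_pmf.expectation
     (pair_pmf (replicate_pmf (nat \<lceil>4 * (real s * ln (1 / eps) / eps) * real m\<rceil>) (labeled Dstar f))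
               (replicate_pmf (nat \<lceil>40 * (real s * real d * ln (real n) * (ln (1 / eps)) ^ 3 / eps ^ 2)\<rceil>) (labeled Dstar f)))
     (\<lambda>(Strain, Stest). error_opt (partition_learn A n d s eps Strain Stest) (labeled Dstar f)) \<le> 100 * eps"
proof -
  define P where "P = labeled Dstar f"
  define Ntr where "Ntr = nat \<lceil>4 * (real s * ln (1 / eps) / eps) * real m\<rceil>"
  define Nte where "Nte = nat \<lceil>40 * (real s * real d * ln (real n) * (ln (1 / eps)) ^ 3 / eps ^ 2)\<rceil>"
  define Lg where "Lg = ln (1 / eps)"
  define err where "err = (\<lambda>(Strain, Stest). error_opt (partition_learn A n d s eps Strain Stest) (labeled Dstar f))"
  have errb: "\<bar>err z\<bar> \<le> 1" for z by (auto simp: err_def error_opt_def case_prod_unfold)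
  obtain \<rho>s where len: "length \<rho>s = s"
    and pd: "\<forall>i<s. length (\<rho>s ! i) = n \<and> depth (\<rho>s ! i) \<le> d"
    and disj: "\<forall>i<s. \<forall>j<s. i \<noteq> j \<longrightarrow> \<not> (\<exists>x. in_restr x (\<rho>s ! i) \<and> in_restr x (\<rho>s ! j))"
    and cov: "\<forall>x\<in>set_pmf Dstar. \<exists>i<s. in_restr x (\<rho>s ! i)"
    and inD: "\<forall>i<s. measure_pmf.prob Dstar {x. in_restr x (\<rho>s ! i)} > 0 \<longrightarrow> restrict_pmf Dstar (\<rho>s ! i) \<in> \<D>"
    using part unfolding has_subcube_partition_def by blast
  have pieces: "\<forall>i<s. \<rho>s ! i \<in> restrs n d" using pd by (simp add: restrs_def)
  have s_pos: "0 < s"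
  proof -
    obtain x where "x \<in> set_pmf Dstar" using set_pmf_not_empty by fast
    then show ?thesis using cov by auto
  qed
  have finD: "finite (set_pmf Dstar)"
  proof -
    have "finite {xs. set xs \<subseteq> (UNIV :: bool set) \<and> length xs = n}" by (rule finite_lists_length_eq) simp
    moreover have "set_pmf Dstar \<subseteq> {xs. set xs \<subseteq> (UNIV :: bool set) \<and> length xs = n}" using supp by auto
    ultimately show ?thesis by (rule finite_subset[rotated])
  qed
  have coverP: "\<forall>z\<in>set_pmf P. \<exists>i<s. in_restr (fst z) (\<rho>s ! i)" using cov by (auto simp: P_def labeled_def)
  have E1: "measure_pmf.expectation (pair_pmf (replicate_pmf Ntr P) (replicate_pmf Nte P)) err \<le> 1"
    by (rule measure_pmf.integral_le_const) (use errb in \<open>auto intro!: integrable_pmf_bounded[where B=1] simp: abs_le_iff\<close>)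
  show ?thesis
  proof (cases "Lg < 1")
    case True
    have "1 / eps < 3"
    proof -
      have "1 / eps = exp Lg" using eps by (simp add: Lg_def)
      also have "\<dots> < exp 1" using True by simp
      also have "\<dots> \<le> 3" by (rule exp_le)
      finally show ?thesis .
    qed
    then have "1 \<le> 100 * eps" using eps by (simp add: divide_less_eq)
    then show ?thesis using E1 unfolding err_def P_def Ntr_def Nte_def by linarith
  next
    case False
    then have Lg1: "Lg \<ge> 1" by simp
    have Lgpos: "Lg > 0" using Lg1 by simp
    define H where "H = (\<lambda>Str \<rho>. A (restrict_sample \<rho> Str))"
    define W where "W = (\<lambda>Str. measure_pmf.prob P {(x, y). \<exists>i<s. in_restr x (\<rho>s ! i) \<and> H Str (\<rho>s ! i) x \<noteq> y})"
    define X where "X = (\<lambda>i Str. measure_pmf.prob P {(x, y). in_restr x (\<rho>s ! i) \<and> A (restrict_sample (\<rho>s ! i) Str) x \<noteq> y})"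
    define p where "p = (\<lambda>i. measure_pmf.prob Dstar {x. in_restr x (\<rho>s ! i)})"
    have lnn: "ln (real n) > 0" using n by simp
    have Nte_pos: "0 < Nte"
    proof -
      have "0 < 40 * (real s * real d * ln (real n) * (ln (1 / eps)) ^ 3 / eps ^ 2)"
        using s_pos d lnn Lgpos eps by (simp add: Lg_def)
      then show ?thesis unfolding Nte_def by linarith
    qed
    define \<Lambda> where "\<Lambda> = {L. set L \<subseteq> restrs n d \<and> length L \<le> nat \<lceil>2 * real s * ln (1 / eps)\<rceil>}"
    have cardL: "real (card \<Lambda>) * exp (- real Nte * eps / 2) \<le> eps"
    proof -
      define K where "K = card (restrs n d)"
      have K1: "1 \<le> K"
      proof -
        have "restrs n d \<noteq> {}" using restrs_nonempty by blast
        then show ?thesis using finite_restrs by (simp add: K_def Suc_le_eq card_gt_0_iff)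
      qed
      have "card \<Lambda> = (\<Sum>i\<le>nat \<lceil>2 * real s * ln (1 / eps)\<rceil>. K ^ i)"
        unfolding \<Lambda>_def K_def by (rule card_lists_length_le[OF finite_restrs])
      moreover have "real (\<Sum>i\<le>nat \<lceil>2 * real s * ln (1 / eps)\<rceil>. K ^ i) * exp (- real Nte * eps / 2) \<le> eps"
        by (rule test_arith[OF n d _ eps _ refl K1]) (use s_pos Lg1 card_restrs real_nat_ceiling_ge in \<open>auto simp: Lg_def K_def Nte_def\<close>)
      ultimately show ?thesis by simp
    qed
    have inner: "measure_pmf.expectation (replicate_pmf Nte P) (\<lambda>Ste. err (Str, Ste)) \<le> 4 * (Lg + 1) * W Str + 4 * eps" for Str
    proof -
      have "measure_pmf.expectation (replicate_pmf Nte P) (\<lambda>Ste. err (Str, Ste)) =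
         measure_pmf.expectation (replicate_pmf Nte P) (\<lambda>Ste. error_opt (subcube_list_hyp (find_subcube_list n d Ste (H Str) eps s) (H Str)) P)"
        by (simp add: err_def partition_learn_def H_def P_def Let_def)
      also have "\<dots> \<le> 4 * (ln (1 / eps) + 1) * W Str + 3 * eps + real (card \<Lambda>) * exp (- real Nte * eps / 2)"
        unfolding W_def \<Lambda>_def
        by (rule test_bound[OF Nte_pos eps s_pos len pieces coverP disj])
      finally show ?thesis using cardL by (simp add: Lg_def)
    qed
    have Wle: "W Str \<le> (\<Sum>i<s. X i Str)" for Str
    proof -
      have "{(x, y). \<exists>i<s. in_restr x (\<rho>s ! i) \<and> H Str (\<rho>s ! i) x \<noteq> y} =
          (\<Union>i\<in>{..<s}. {(x, y). in_restr x (\<rho>s ! i) \<and> A (restrict_sample (\<rho>s ! i) Str) x \<noteq> y})"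
        by (auto simp: H_def)
      then show ?thesis unfolding W_def X_def
        using measure_pmf.finite_measure_subadditive_finite[of "{..<s}" "\<lambda>i. {(x, y). in_restr x (\<rho>s ! i) \<and> A (restrict_sample (\<rho>s ! i) Str) x \<noteq> y}" P]
        by simp
    qed
    have Xb: "\<bar>X i Str\<bar> \<le> 1" for i Str by (simp add: X_def)
    have Xi: "measure_pmf.expectation (replicate_pmf Ntr P) (X i) \<le> p i * (eps / Lg) + 4 * real m / real Ntr" if "i < s" for i
    proof -
      have "measure_pmf.expectation (replicate_pmf Ntr (labeled Dstar f))
           (\<lambda>Str. measure_pmf.prob (labeled Dstar f) {(x, y). in_restr x (\<rho>s ! i) \<and> A (restrict_sample (\<rho>s ! i) Str) x \<noteq> y})
         \<le> measure_pmf.prob Dstar {x. in_restr x (\<rho>s ! i)} * (eps / ln (1 / eps)) + 4 * real m / real Ntr"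
      proof (rule piece_bound[OF finD _ _ uf])
        show "0 < m \<Longrightarrow> 0 < Ntr"
        proof -
          assume m: "0 < m"
          have "0 < 4 * (real s * ln (1 / eps) / eps) * real m" using m s_pos Lgpos eps by (simp add: Lg_def)
          then show "0 < Ntr" unfolding Ntr_def by linarith
        qed
        assume "measure_pmf.prob Dstar {x. in_restr x (\<rho>s ! i)} > 0"
        then have "restrict_pmf Dstar (\<rho>s ! i) \<in> \<D>" using inD that by blast
        then show "measure_pmf.expectation (replicate_pmf m (labeled (restrict_pmf Dstar (\<rho>s ! i)) f))
           (\<lambda>S. error (A S) (labeled (restrict_pmf Dstar (\<rho>s ! i)) f)) \<le> eps / ln (1 / eps)"
          using learn fC unfolding learns_def by blast
      qed
      then show ?thesis by (simp add: X_def P_def p_def Lg_def)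
    qed
    have sump: "(\<Sum>i<s. p i) \<le> 1"
    proof -
      have "disjoint_family_on (\<lambda>i. {x. in_restr x (\<rho>s ! i)}) {..<s}"
        using disj unfolding disjoint_family_on_def by auto
      then have "measure_pmf.prob Dstar (\<Union>i\<in>{..<s}. {x. in_restr x (\<rho>s ! i)}) = (\<Sum>i<s. p i)"
        unfolding p_def by (intro measure_pmf.finite_measure_finite_Union) auto
      then show ?thesis using measure_pmf.prob_le_1 by metis
    qed
    have mterm: "real s * (4 * real m / real Ntr) \<le> eps / Lg"
    proof (cases "m = 0")
      case True
      then show ?thesis using eps Lgpos by simp
    next
      case False
      have ge: "real Ntr \<ge> 4 * (real s * Lg / eps) * real m" unfolding Ntr_def Lg_def by (rule real_nat_ceiling_ge)
      have pos: "4 * (real s * Lg / eps) * real m > 0" using False s_pos Lgpos eps by simp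
      have "real s * (4 * real m / real Ntr) \<le> real s * (4 * real m / (4 * (real s * Lg / eps) * real m))"
      proof (rule mult_left_mono)
        have Npos: "real Ntr > 0" using ge pos by linarith
        show "4 * real m / real Ntr \<le> 4 * real m / (4 * (real s * Lg / eps) * real m)"
          using divide_left_mono[OF ge, of "4 * real m"] mult_pos_pos[OF Npos pos] by simp
      qed simp
      also have "\<dots> = eps / Lg" using False s_pos eps Lgpos by (simp add: field_simps)
      finally show ?thesis .
    qed
    have iX: "integrable (measure_pmf (replicate_pmf Ntr P)) (X i)" for i
      by (rule integrable_pmf_bounded[where B=1]) (simp add: Xb)
    have "measure_pmf.expectation (pair_pmf (replicate_pmf Ntr P) (replicate_pmf Nte P)) err
        = measure_pmf.expectation (replicate_pmf Ntr P) (\<lambda>Str. measure_pmf.expectation (replicate_pmf Nte P) (\<lambda>Ste. err (Str, Ste)))"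
      by (rule expectation_pair_pmf_bounded[OF errb])
    also have "\<dots> \<le> measure_pmf.expectation (replicate_pmf Ntr P) (\<lambda>Str. 4 * (Lg + 1) * (\<Sum>i<s. X i Str) + 4 * eps)"
    proof (rule integral_mono)
      show "integrable (measure_pmf (replicate_pmf Ntr P)) (\<lambda>Str. measure_pmf.expectation (replicate_pmf Nte P) (\<lambda>Ste. err (Str, Ste)))"
        by (rule integrable_pmf_bounded[where B=1]) (rule abs_expectation_le, simp add: errb)
      show "integrable (measure_pmf (replicate_pmf Ntr P)) (\<lambda>Str. 4 * (Lg + 1) * (\<Sum>i<s. X i Str) + 4 * eps)"
        using iX by simp
      fix Str
      show "measure_pmf.expectation (replicate_pmf Nte P) (\<lambda>Ste. err (Str, Ste)) \<le> 4 * (Lg + 1) * (\<Sum>i<s. X i Str) + 4 * eps"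
      proof -
        have "4 * (Lg + 1) * W Str \<le> 4 * (Lg + 1) * (\<Sum>i<s. X i Str)"
          by (rule mult_left_mono[OF Wle[of Str]]) (use Lgpos in simp)
        then show ?thesis using inner[of Str] by linarith
      qed
    qed
    also have "\<dots> = 4 * (Lg + 1) * (\<Sum>i<s. measure_pmf.expectation (replicate_pmf Ntr P) (X i)) + 4 * eps"
      using iX by (simp add: Bochner_Integration.integral_sum)
    also have "(\<Sum>i<s. measure_pmf.expectation (replicate_pmf Ntr P) (X i)) \<le> (\<Sum>i<s. p i * (eps / Lg) + 4 * real m / real Ntr)"
      by (rule sum_mono) (rule Xi, simp)
    also have "\<dots> = (\<Sum>i<s. p i) * (eps / Lg) + real s * (4 * real m / real Ntr)"
      by (simp add: sum.distrib sum_distrib_right del: times_divide_eq_right)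
    also have "\<dots> \<le> 1 * (eps / Lg) + eps / Lg"
      using sump mterm eps Lgpos by (intro add_mono mult_right_mono) auto
    finally have "measure_pmf.expectation (pair_pmf (replicate_pmf Ntr P) (replicate_pmf Nte P)) err
        \<le> 4 * (Lg + 1) * (2 * eps / Lg) + 4 * eps"
      using Lgpos by (simp add: mult_left_mono)
    also have "4 * (Lg + 1) * (2 * eps / Lg) \<le> 16 * eps"
    proof -
      have "(Lg + 1) / Lg \<le> 2" using Lg1 by (simp add: divide_le_eq)
      then have "8 * eps * ((Lg + 1) / Lg) \<le> 8 * eps * 2" using eps by (intro mult_left_mono) auto
      then show ?thesis by (simp add: field_simps)
    qed
    finally show ?thesis unfolding err_def P_def Ntr_def Nte_def using eps by linarith
  qed
qed



theorem lemma7p3: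
  shows "\<exists>c1 c2 c3 :: real. c1 > 0 \<and> c2 > 0 \<and> c3 > 0 \<and>
    (\<forall>(n::nat) (C :: (point \<Rightarrow> bool) set) (\<D> :: point pmf set) (Dstar :: point pmf)
       (d::nat) (s::nat) (eps::real) (A :: sample \<Rightarrow> hyp) (m::nat) (f :: point \<Rightarrow> bool).
       2 \<le> n \<longrightarrow> 1 \<le> d \<longrightarrow> 0 < eps \<longrightarrow> eps < 1 \<longrightarrow>
       set_pmf Dstar \<subseteq> {x. length x = n} \<longrightarrow>
       closed_under_restrictions n \<D> \<longrightarrow>
       has_subcube_partition n d s Dstar \<D> \<longrightarrow>
       learns A C \<D> m (eps / ln (1 / eps)) \<longrightarrow>
       uses_first m A \<longrightarrow>
       f \<in> C \<longrightarrow>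
       (let mtrain = nat \<lceil>c1 * (real s * ln (1 / eps) / eps) * real m\<rceil>;
            mtest = nat \<lceil>c2 * (real s * real d * ln (real n) * (ln (1 / eps)) ^ 3 / eps ^ 2)\<rceil>
        in measure_pmf.expectation
             (pair_pmf (replicate_pmf mtrain (labeled Dstar f)) (replicate_pmf mtest (labeled Dstar f)))
             (\<lambda>(Strain, Stest). error_opt (partition_learn A n d s eps Strain Stest) (labeled Dstar f))
           \<le> c3 * eps))"
  apply (rule exI[of _ 4], rule exI[of _ 40], rule exI[of _ 100])
  apply (intro conjI)
     apply simp
    apply simp
   apply simp
  apply (intro allI impI)
  apply (unfold Let_def)
  apply (rule main_bound)
          apply assumption+
  done

end
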